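(* Fix $\lambda>0$. Suppose Assumptions (NC) and (B) hold, $\mathbb H\subseteq L_2(W,A,X)$ and a class $\mathbb Q$ with $\pi\mathbb Q\subseteq L_2(Z,A,X)$ satisfy $\mathbb H_0^{\mathrm{obs}}\cap\mathbb H\ne\emptyset$ and $\mathbb Q_0^{\mathrm{obs}}\cap\mathbb Q\ne\emptyset$, and $\mathbb Q'\subseteq L_2(Z,A,X)$, $\mathbb H'\subseteq L_2(W,A,X)$ are star-shaped and satisfy $P_z(\mathbb H-\mathbb H_0^{\mathrm{obs}})\subseteq\mathbb Q'$ and $\pi P_w(\mathbb Q-\mathbb Q_0^{\mathrm{obs}})\subseteq\mathbb H'$. Then $$\mathbb H_0^{\mathrm{obs}}\cap\mathbb H=\operatorname*{argmin}_{h\in\mathbb H}\sup_{q\in\mathbb Q'}\Big\{\mathbb E[q(Z,A,X)(h(W,A,X)-Y)]-\lambda\|q\|_2^2\Big\},$$ $$\mathbb Q_0^{\mathrm{obs}}\cap\mathbb Q=\operatorname*{argmin}_{q\in\mathbb Q}\sup_{h\in\mathbb H'}\Big\{\mathbb E[\pi(A\mid X)q(Z,A,X)h(W,A,X)-(\mathcal T h)(W,X)]-\lambda\|h\|_2^2\Big\}.$$ Moreover, when $\lambda=1/2$ the same conclusions hold without assuming $\mathbb Q',\mathbb H'$ are star-shaped.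
   Context: Setup: random variables $(U,X,A,Z,W,Y)$ with $X$ observed covariates, $A\in\mathcal A$ an action ($\mathcal A$ carries a base measure $\mu$), $Z$ a negative control action, $W$ a negative control outcome, $Y$ real outcome, $U$ an unobserved confounder. Potential outcomes $Y(a),Y(a,z),W(a,z)$. $\pi(a\mid x)$ is a given real contrast function. $f(a\mid u,x)$, $f(a\mid w,x)$ are the conditional densities w.r.t. $\mu$ of $A$ given $(U,X)$ and given $(W,X)$. Assumption (NC): (i) $Y=Y(A,Z)$, $W=W(A,Z)$; (ii) $Y(a,z)=Y(a)$; (iii) $W(a,z)=W$; (iv) $(Z,A)\perp(Y(a),W)\mid(U,X)$ for all $a$; (v) $|\pi(a\mid x)/f(a\mid x,u)|<\infty$ for all $a,x,u$. Bridge sets: $\mathbb H_0=\{h\in L_2(W,A,X):\mathbb E[Y-h\mid A,U,X]=0\}$, $\mathbb Q_0=\{q:\pi q\in L_2(Z,A,X),\ \mathbb E[\pi(A\mid X)(q(Z,A,X)-1/f(A\mid U,X))\mid A,U,X]=0\}$ with $(\pi q)(z,a,x)=\pi(a\mid x)q(z,a,x)$; observed bridge sets $\mathbb H_0^{\mathrm{obs}}=\{h\in L_2(W,A,X):\mathbb E[Y-h(W,A,X)\mid Z,A,X]=0\}$, $\mathbb Q_0^{\mathrm{obs}}=\{q:\pi q\in L_2(Z,A,X),\ \mathbb E[\pi(A\mid X)(q(Z,A,X)-1/f(A\mid W,X))\mid W,A,X]=0\}$. Assumption (B): $\mathbb H_0\ne\emptyset$, $\mathbb Q_0\ne\emptyset$.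 $(\mathcal T h)(w,x)=\int h(w,a,x)\pi(a\mid x)d\mu(a)$. $P_z h=\mathbb E[h(W,A,X)\mid Z,A,X]$, $P_w q=\mathbb E[q(Z,A,X)\mid W,A,X]$; $P_z(\mathbb H-\mathbb H_0^{\mathrm{obs}})=\{P_z(h-h_0):h\in\mathbb H,h_0\in\mathbb H_0^{\mathrm{obs}}\}$, $\pi P_w(\mathbb Q-\mathbb Q_0^{\mathrm{obs}})=\{P_w(\pi q-\pi q_0):q\in\mathbb Q,q_0\in\mathbb Q_0^{\mathrm{obs}}\}$. A set $S$ is star-shaped if $\alpha s\in S$ for all $s\in S$, $\alpha\in[0,1]$. $\|\cdot\|_2$ is the $L_2$ norm under the data distribution. *)

theory Defs
  imports "HOL-Probability.Probability"
begin

definition sig :: "'o measure \<Rightarrow> ('o \<Rightarrow> 'b) \<Rightarrow> 'b measure \<Rightarrow> 'o measure" where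
  "sig M V N = vimage_algebra (space M) V N"

definition cexp :: "'o measure \<Rightarrow> ('o \<Rightarrow> 'b) \<Rightarrow> 'b measure \<Rightarrow> ('o \<Rightarrow> real) \<Rightarrow> 'o \<Rightarrow> real" where
  "cexp M V N f = real_cond_exp M (sig M V N) f"

definition L2 :: "'o measure \<Rightarrow> ('o \<Rightarrow> 'b) \<Rightarrow> 'b measure \<Rightarrow> ('b \<Rightarrow> real) set" where
  "L2 M V N = {g. g \<in> borel_measurable N \<and> integrable M (\<lambda>\<omega>. (g (V \<omega>))\<^sup>2)}"

definition cond_indep ::
  "'o measure \<Rightarrow> ('o \<Rightarrow> 'b) \<Rightarrow> 'b measure \<Rightarrow> ('o \<Rightarrow> 'c) \<Rightarrow> 'c measure
     \<Rightarrow> ('o \<Rightarrow> 'd) \<Rightarrow> 'd measure \<Rightarrow> bool" where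
  "cond_indep M S NS T NT V NV \<longleftrightarrow>
     (\<forall>B\<in>sets NS. \<forall>C\<in>sets NT. AE \<omega> in M.
        cexp M V NV (\<lambda>\<omega>. indicator B (S \<omega>) * indicator C (T \<omega>)) \<omega>
        = cexp M V NV (\<lambda>\<omega>. indicator B (S \<omega>)) \<omega> * cexp M V NV (\<lambda>\<omega>. indicator C (T \<omega>)) \<omega>)"

definition cond_density ::
  "'o measure \<Rightarrow> ('o \<Rightarrow> 'a) \<Rightarrow> 'a measure \<Rightarrow> ('o \<Rightarrow> 'b) \<Rightarrow> 'b measure
     \<Rightarrow> ('a \<Rightarrow> 'b \<Rightarrow> real) \<Rightarrow> bool" where
  "cond_density M A mu V MV f \<longleftrightarrow>
     (\<lambda>p. f (fst p) (snd p)) \<in> borel_measurable (mu \<Otimes>\<^sub>M MV) \<and> (\<forall>a v. 0 \<le> f a v) \<and>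
     (\<forall>B\<in>sets mu. AE \<omega> in M.
        ennreal (cexp M V MV (\<lambda>\<omega>. indicator B (A \<omega>)) \<omega>)
        = (\<integral>\<^sup>+ a. ennreal (f a (V \<omega>)) * indicator B a \<partial>mu))"

definition pimul :: "('a \<Rightarrow> 'x \<Rightarrow> real) \<Rightarrow> ('z \<times> 'a \<times> 'x \<Rightarrow> real) \<Rightarrow> 'z \<times> 'a \<times> 'x \<Rightarrow> real" where
  "pimul pol q = (\<lambda>(z, a, x). pol a x * q (z, a, x))"

definition Tmap :: "'a measure \<Rightarrow> ('a \<Rightarrow> 'x \<Rightarrow> real) \<Rightarrow> ('w \<times> 'a \<times> 'x \<Rightarrow> real) \<Rightarrow> 'w \<Rightarrow> 'x \<Rightarrow> real" where
  "Tmap mu pol h w x = (\<integral>a. h (w, a, x) * pol a x \<partial>mu)"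

definition star_shaped :: "('b \<Rightarrow> real) set \<Rightarrow> bool" where
  "star_shaped S \<longleftrightarrow> (\<forall>s\<in>S. \<forall>\<alpha>::real. 0 \<le> \<alpha> \<and> \<alpha> \<le> 1 \<longrightarrow> (\<lambda>v. \<alpha> * s v) \<in> S)"

definition argmin_on :: "'b set \<Rightarrow> ('b \<Rightarrow> ereal) \<Rightarrow> 'b set" where
  "argmin_on S F = {s \<in> S. \<forall>t\<in>S. F s \<le> F t}"

definition H0 ::
  "'o measure \<Rightarrow> ('o \<Rightarrow> 'u) \<Rightarrow> 'u measure \<Rightarrow> ('o \<Rightarrow> 'x) \<Rightarrow> 'x measure \<Rightarrow> ('o \<Rightarrow> 'a) \<Rightarrow> 'a measure
   \<Rightarrow> ('o \<Rightarrow> 'w) \<Rightarrow> 'w measure \<Rightarrow> ('o \<Rightarrow> real) \<Rightarrow> ('w \<times> 'a \<times> 'x \<Rightarrow> real) set" where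
  "H0 M U MU X MX A mu W MW Y =
     {h \<in> L2 M (\<lambda>\<omega>. (W \<omega>, A \<omega>, X \<omega>)) (MW \<Otimes>\<^sub>M mu \<Otimes>\<^sub>M MX).
        AE \<omega> in M. cexp M (\<lambda>\<omega>. (A \<omega>, U \<omega>, X \<omega>)) (mu \<Otimes>\<^sub>M MU \<Otimes>\<^sub>M MX)
                      (\<lambda>\<omega>. Y \<omega> - h (W \<omega>, A \<omega>, X \<omega>)) \<omega> = 0}"

definition Q0 ::
  "'o measure \<Rightarrow> ('o \<Rightarrow> 'u) \<Rightarrow> 'u measure \<Rightarrow> ('o \<Rightarrow> 'x) \<Rightarrow> 'x measure \<Rightarrow> ('o \<Rightarrow> 'a) \<Rightarrow> 'a measure
   \<Rightarrow> ('o \<Rightarrow> 'z) \<Rightarrow> 'z measure \<Rightarrow> ('a \<Rightarrow> 'x \<Rightarrow> real) \<Rightarrow> ('a \<Rightarrow> 'u \<Rightarrow> 'x \<Rightarrow> real)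
   \<Rightarrow> ('z \<times> 'a \<times> 'x \<Rightarrow> real) set" where
  "Q0 M U MU X MX A mu Z MZ pol fUX =
     {q. pimul pol q \<in> L2 M (\<lambda>\<omega>. (Z \<omega>, A \<omega>, X \<omega>)) (MZ \<Otimes>\<^sub>M mu \<Otimes>\<^sub>M MX) \<and>
        (AE \<omega> in M. cexp M (\<lambda>\<omega>. (A \<omega>, U \<omega>, X \<omega>)) (mu \<Otimes>\<^sub>M MU \<Otimes>\<^sub>M MX)
           (\<lambda>\<omega>. pol (A \<omega>) (X \<omega>) * (q (Z \<omega>, A \<omega>, X \<omega>) - 1 / fUX (A \<omega>) (U \<omega>) (X \<omega>))) \<omega> = 0)}"

definition H0obs ::
  "'o measure \<Rightarrow> ('o \<Rightarrow> 'x) \<Rightarrow> 'x measure \<Rightarrow> ('o \<Rightarrow> 'a) \<Rightarrow> 'a measure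
   \<Rightarrow> ('o \<Rightarrow> 'z) \<Rightarrow> 'z measure \<Rightarrow> ('o \<Rightarrow> 'w) \<Rightarrow> 'w measure \<Rightarrow> ('o \<Rightarrow> real)
   \<Rightarrow> ('w \<times> 'a \<times> 'x \<Rightarrow> real) set" where
  "H0obs M X MX A mu Z MZ W MW Y =
     {h \<in> L2 M (\<lambda>\<omega>. (W \<omega>, A \<omega>, X \<omega>)) (MW \<Otimes>\<^sub>M mu \<Otimes>\<^sub>M MX).
        AE \<omega> in M. cexp M (\<lambda>\<omega>. (Z \<omega>, A \<omega>, X \<omega>)) (MZ \<Otimes>\<^sub>M mu \<Otimes>\<^sub>M MX)
                      (\<lambda>\<omega>. Y \<omega> - h (W \<omega>, A \<omega>, X \<omega>)) \<omega> = 0}"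

definition Q0obs ::
  "'o measure \<Rightarrow> ('o \<Rightarrow> 'x) \<Rightarrow> 'x measure \<Rightarrow> ('o \<Rightarrow> 'a) \<Rightarrow> 'a measure
   \<Rightarrow> ('o \<Rightarrow> 'z) \<Rightarrow> 'z measure \<Rightarrow> ('o \<Rightarrow> 'w) \<Rightarrow> 'w measure
   \<Rightarrow> ('a \<Rightarrow> 'x \<Rightarrow> real) \<Rightarrow> ('a \<Rightarrow> 'w \<Rightarrow> 'x \<Rightarrow> real)
   \<Rightarrow> ('z \<times> 'a \<times> 'x \<Rightarrow> real) set" where
  "Q0obs M X MX A mu Z MZ W MW pol fWX =
     {q. pimul pol q \<in> L2 M (\<lambda>\<omega>. (Z \<omega>, A \<omega>, X \<omega>)) (MZ \<Otimes>\<^sub>M mu \<Otimes>\<^sub>M MX) \<and>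
        (AE \<omega> in M. cexp M (\<lambda>\<omega>. (W \<omega>, A \<omega>, X \<omega>)) (MW \<Otimes>\<^sub>M mu \<Otimes>\<^sub>M MX)
           (\<lambda>\<omega>. pol (A \<omega>) (X \<omega>) * (q (Z \<omega>, A \<omega>, X \<omega>) - 1 / fWX (A \<omega>) (W \<omega>) (X \<omega>))) \<omega> = 0)}"

end

theory Submission imports Defs begin

lemma sfs_sig:
  assumes "prob_space M" "V \<in> measurable M N"
  shows "sigma_finite_subalgebra M (sig M V N)"
proof -
  have "subalgebra M (sig M V N)"
    unfolding subalgebra_def sig_def
    using assms(2) by (auto simp: sets_vimage_algebra2 measurable_space intro!: measurable_sets)
  note sub = this
  interpret prob_space M by fact
  from sub have "finite_measure_subalgebra M (sig M V N)"
    unfolding finite_measure_subalgebra_def finite_measure_subalgebra_axioms_def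
    using finite_measure_axioms by simp
  then show ?thesis by (rule finite_measure_subalgebra_is_sigma_finite)
qed

lemma meas_sig:
  assumes "g \<in> borel_measurable N" "V \<in> measurable M N"
  shows "(\<lambda>\<omega>. g (V \<omega>)) \<in> borel_measurable (sig M V N)"
  unfolding sig_def
  by (rule measurable_compose[OF measurable_vimage_algebra1 assms(1)])
     (rule Pi_I, rule measurable_space[OF assms(2)])

lemma L2_prod:
  fixes f g :: "'o \<Rightarrow> real"
  assumes [measurable]: "f \<in> borel_measurable M" "g \<in> borel_measurable M"
    and "integrable M (\<lambda>x. (f x)\<^sup>2)" "integrable M (\<lambda>x. (g x)\<^sup>2)"
  shows "integrable M (\<lambda>x. f x * g x)"
proof (rule Bochner_Integration.integrable_bound)
  show "integrable M (\<lambda>x. (f x)\<^sup>2 + (g x)\<^sup>2)" using assms by auto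
  show "AE x in M. norm (f x * g x) \<le> norm ((f x)\<^sup>2 + (g x)\<^sup>2)"
  proof (intro AE_I2)
    fix x
    have "0 \<le> (\<bar>f x\<bar> - \<bar>g x\<bar>)\<^sup>2" by simp
    then have "2 * \<bar>f x\<bar> * \<bar>g x\<bar> \<le> (f x)\<^sup>2 + (g x)\<^sup>2"
      by (simp add: power2_eq_square algebra_simps)
    moreover have "\<bar>f x\<bar> * \<bar>g x\<bar> \<ge> 0" by simp
    ultimately have "\<bar>f x\<bar> * \<bar>g x\<bar> \<le> (f x)\<^sup>2 + (g x)\<^sup>2" by linarith
    moreover have "norm ((f x)\<^sup>2 + (g x)\<^sup>2) = (f x)\<^sup>2 + (g x)\<^sup>2" by simp
    ultimately show "norm (f x * g x) \<le> norm ((f x)\<^sup>2 + (g x)\<^sup>2)"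
      by (simp add: abs_mult)
  qed
qed measurable

lemma core:
  fixes S :: "('b \<Rightarrow> real) set" and V :: "'o \<Rightarrow> 'b"
  assumes prob: "prob_space M" and V: "V \<in> measurable M N"
    and SL2: "S \<subseteq> L2 M V N" and ss: "ss \<in> S"
    and F: "\<And>s. s \<in> S \<Longrightarrow> F s = (\<integral>\<omega>. s (V \<omega>) * ss (V \<omega>) \<partial>M) - lam * (\<integral>\<omega>. (s (V \<omega>))\<^sup>2 \<partial>M)"
    and lam: "lam > 0" and so: "star_shaped S \<or> lam = 1/2"
  shows "(AE \<omega> in M. ss (V \<omega>) = 0) \<Longrightarrow> (SUP s\<in>S. ereal (F s)) = 0"
    and "\<not> (AE \<omega> in M. ss (V \<omega>) = 0) \<Longrightarrow> (SUP s\<in>S. ereal (F s)) > 0"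
proof -
  have ssm: "(\<lambda>\<omega>. ss (V \<omega>)) \<in> borel_measurable M" and ssi: "integrable M (\<lambda>\<omega>. (ss (V \<omega>))\<^sup>2)"
    using SL2 ss V unfolding L2_def by auto
  {
    assume z: "AE \<omega> in M. ss (V \<omega>) = 0"
    have le: "F s \<le> 0" if "s \<in> S" for s
    proof -
      have "(\<integral>\<omega>. s (V \<omega>) * ss (V \<omega>) \<partial>M) = (\<integral>\<omega>. 0 \<partial>M)"
        by (rule integral_cong_AE) (use z that SL2 ssm V in \<open>auto simp: L2_def\<close>)
      moreover have "(\<integral>\<omega>. (s (V \<omega>))\<^sup>2 \<partial>M) \<ge> 0" by simp
      ultimately show ?thesis using F[OF that] lam by simp
    qed
    have e0: "F ss = 0"
    proof -
      have "(\<integral>\<omega>. ss (V \<omega>) * ss (V \<omega>) \<partial>M) = (\<integral>\<omega>. 0 \<partial>M)"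
        by (rule integral_cong_AE) (use z ssm in auto)
      moreover have "(\<integral>\<omega>. (ss (V \<omega>))\<^sup>2 \<partial>M) = (\<integral>\<omega>. 0 \<partial>M)"
        by (rule integral_cong_AE) (use z ssm in auto)
      ultimately show ?thesis using F[OF ss] by simp
    qed
    show "(SUP s\<in>S. ereal (F s)) = 0"
    proof (rule antisym)
      show "(SUP s\<in>S. ereal (F s)) \<le> 0" by (rule SUP_least) (use le in auto)
      show "0 \<le> (SUP s\<in>S. ereal (F s))" using SUP_upper[OF ss, of "\<lambda>s. ereal (F s)"] e0 by (simp add: zero_ereal_def)
    qed
  }
  {
    assume nz: "\<not> (AE \<omega> in M. ss (V \<omega>) = 0)"
    define c where "c = (\<integral>\<omega>. (ss (V \<omega>))\<^sup>2 \<partial>M)"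
    have "c \<noteq> 0"
    proof
      assume "c = 0"
      then have "AE \<omega> in M. (ss (V \<omega>))\<^sup>2 = 0"
        using integral_nonneg_eq_0_iff_AE[OF ssi] unfolding c_def by auto
      then have "AE \<omega> in M. ss (V \<omega>) = 0" by auto
      with nz show False by simp
    qed
    moreover have "c \<ge> 0" unfolding c_def by simp
    ultimately have cpos: "c > 0" by simp
    obtain \<alpha> where a: "0 < \<alpha>" "\<alpha> \<le> 1" "lam * \<alpha> \<le> 1/2" "(\<lambda>v. \<alpha> * ss v) \<in> S"
    proof (cases "lam = 1/2")
      case True
      then show ?thesis using that[of 1] ss by simp
    next
      case False
      then have st: "star_shaped S" using so by simp
      define \<alpha> where "\<alpha> = min 1 (1 / (2 * lam))"
      have "0 < \<alpha>" "\<alpha> \<le> 1" using lam by (auto simp: \<alpha>_def)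
      moreover have "lam * \<alpha> \<le> 1/2"
      proof -
        have "\<alpha> \<le> 1 / (2 * lam)" by (simp add: \<alpha>_def)
        then have "lam * \<alpha> \<le> lam * (1 / (2 * lam))" using lam by (intro mult_left_mono) auto
        also have "\<dots> = 1/2" using lam by simp
        finally show ?thesis .
      qed
      moreover have "(\<lambda>v. \<alpha> * ss v) \<in> S" using st ss \<open>0 < \<alpha>\<close> \<open>\<alpha> \<le> 1\<close>
        unfolding star_shaped_def by auto
      ultimately show ?thesis using that by blast
    qed
    have i1: "(\<integral>\<omega>. \<alpha> * ss (V \<omega>) * ss (V \<omega>) \<partial>M) = \<alpha> * c"
      using integral_mult_right_zero[of M \<alpha> "\<lambda>\<omega>. ss (V \<omega>) * ss (V \<omega>)"]
      by (simp add: c_def power2_eq_square mult.assoc)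
    have i2: "(\<integral>\<omega>. (\<alpha> * ss (V \<omega>))\<^sup>2 \<partial>M) = \<alpha>\<^sup>2 * c"
      using integral_mult_right_zero[of M "\<alpha>\<^sup>2" "\<lambda>\<omega>. (ss (V \<omega>))\<^sup>2"]
      by (simp add: c_def power_mult_distrib)
    have "F (\<lambda>v. \<alpha> * ss v) = \<alpha> * c - lam * (\<alpha>\<^sup>2 * c)"
      using F[OF a(4)] i1 i2 by simp
    also have "\<dots> = \<alpha> * c * (1 - lam * \<alpha>)" by (simp add: power2_eq_square algebra_simps)
    finally have "F (\<lambda>v. \<alpha> * ss v) > 0" using a cpos by simp
    then show "(SUP s\<in>S. ereal (F s)) > 0"
      using SUP_upper[OF a(4), of "\<lambda>s. ereal (F s)"] 
      by (metis ereal_less(2) less_le_trans)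
  }
qed

lemma argmin_char:
  assumes "T0 \<subseteq> T" "T0 \<noteq> {}" "\<And>x. x \<in> T0 \<Longrightarrow> J x = 0" "\<And>x. x \<in> T \<Longrightarrow> x \<notin> T0 \<Longrightarrow> J x > 0"
  shows "T0 = argmin_on T J"
proof -
  have "J t \<ge> 0" if "t \<in> T" for t using assms that by (cases "t \<in> T0") (auto intro: less_imp_le)
  then show ?thesis using assms unfolding argmin_on_def
  proof (intro equalityI subsetI)
    fix x assume x: "x \<in> T0"
    then show "x \<in> {s \<in> T. \<forall>t\<in>T. J s \<le> J t}" using assms \<open>\<And>t. t \<in> T \<Longrightarrow> J t \<ge> 0\<close> by auto
  next
    fix x assume x: "x \<in> {s \<in> T. \<forall>t\<in>T. J s \<le> J t}"
    obtain y where y: "y \<in> T0" using assms(2) by auto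
    show "x \<in> T0"
    proof (rule ccontr)
      assume "x \<notin> T0"
      then have "J x > 0" using assms(4) x by auto
      moreover have "J x \<le> J y" using x y assms(1) by auto
      ultimately show False using assms(3)[OF y] by simp
    qed
  qed
qed

lemma dens_eq:
  fixes f :: "'a \<Rightarrow> 'v \<Rightarrow> real" and V :: "'o \<Rightarrow> 'v" and A :: "'o \<Rightarrow> 'a"
  assumes prob: "prob_space M" and sf: "sigma_finite_measure mu"
    and V[measurable]: "V \<in> measurable M MV" and A[measurable]: "A \<in> measurable M mu"
    and fm: "(\<lambda>p. f (fst p) (snd p)) \<in> borel_measurable (mu \<Otimes>\<^sub>M MV)"
    and rect: "\<And>C B. C \<in> sets MV \<Longrightarrow> B \<in> sets mu \<Longrightarrow>
      (\<integral>\<^sup>+\<omega>. indicator C (V \<omega>) * indicator B (A \<omega>) \<partial>M) =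
      (\<integral>\<^sup>+\<omega>. indicator C (V \<omega>) * (\<integral>\<^sup>+a. ennreal (f a (V \<omega>)) * indicator B a \<partial>mu) \<partial>M)"
  shows "distr M (MV \<Otimes>\<^sub>M mu) (\<lambda>\<omega>. (V \<omega>, A \<omega>)) =
         density (distr M MV V \<Otimes>\<^sub>M mu) (\<lambda>p. ennreal (f (snd p) (fst p)))"
proof -
  interpret prob_space M by fact
  interpret mu: sigma_finite_measure mu by fact
  have fm2[measurable]: "(\<lambda>p. f (snd p) (fst p)) \<in> borel_measurable (MV \<Otimes>\<^sub>M mu)"
    using measurable_compose[OF measurable_Pair[OF measurable_snd measurable_fst] fm] by simp
  have fm3[measurable]: "(\<lambda>p. f (snd p) (fst p)) \<in> borel_measurable (distr M MV V \<Otimes>\<^sub>M mu)"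
  proof -
    have "sets (distr M MV V \<Otimes>\<^sub>M mu) = sets (MV \<Otimes>\<^sub>M mu)" by (rule sets_pair_measure_cong) simp_all
    from measurable_cong_sets[OF this refl, of borel] fm2 show ?thesis by simp
  qed
  let ?E = "{C \<times> B | C B. C \<in> sets MV \<and> B \<in> sets mu}"
  let ?\<Omega> = "space MV \<times> space mu"
  show ?thesis
  proof (rule measure_eqI_generator_eq[where E = ?E and \<Omega> = ?\<Omega> and A = "\<lambda>_. ?\<Omega>"])
    show "Int_stable ?E" by (rule Int_stable_pair_measure_generator)
    show "?E \<subseteq> Pow ?\<Omega>" by (auto dest: sets.sets_into_space)
    show "sets (distr M (MV \<Otimes>\<^sub>M mu) (\<lambda>\<omega>. (V \<omega>, A \<omega>))) = sigma_sets ?\<Omega> ?E"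
      by (simp add: sets_pair_measure)
    show "sets (density (distr M MV V \<Otimes>\<^sub>M mu) (\<lambda>p. ennreal (f (snd p) (fst p)))) = sigma_sets ?\<Omega> ?E"
      by (simp add: sets_pair_measure)
    show "range (\<lambda>_. ?\<Omega>) \<subseteq> ?E" by auto
    show "(\<Union>i. ?\<Omega>) = ?\<Omega>" by simp
    show "emeasure (distr M (MV \<Otimes>\<^sub>M mu) (\<lambda>\<omega>. (V \<omega>, A \<omega>))) ?\<Omega> \<noteq> \<infinity>" for i :: nat
    proof -
      have "?\<Omega> \<in> sets (MV \<Otimes>\<^sub>M mu)" by (metis space_pair_measure sets.top)
      then show ?thesis by (simp add: emeasure_distr)
    qed
    fix X assume "X \<in> ?E"
    then obtain C B where CB[measurable]: "C \<in> sets MV" "B \<in> sets mu" and X: "X = C \<times> B" by auto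
    have Xs[measurable]: "X \<in> sets (MV \<Otimes>\<^sub>M mu)" unfolding X by measurable
    have "emeasure (distr M (MV \<Otimes>\<^sub>M mu) (\<lambda>\<omega>. (V \<omega>, A \<omega>))) X
        = emeasure M ((\<lambda>\<omega>. (V \<omega>, A \<omega>)) -` X \<inter> space M)"
      using X by (intro emeasure_distr) auto
    also have "\<dots> = (\<integral>\<^sup>+\<omega>. indicator ((\<lambda>\<omega>. (V \<omega>, A \<omega>)) -` X \<inter> space M) \<omega> \<partial>M)"
      using X by (intro nn_integral_indicator[symmetric]) measurable
    also have "\<dots> = (\<integral>\<^sup>+\<omega>. indicator C (V \<omega>) * indicator B (A \<omega>) \<partial>M)"
      by (rule nn_integral_cong) (auto simp: X split: split_indicator)
    also have "\<dots> = (\<integral>\<^sup>+\<omega>. indicator C (V \<omega>) * (\<integral>\<^sup>+a. ennreal (f a (V \<omega>)) * indicator B a \<partial>mu) \<partial>M)"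
      by (rule rect) fact+
    also have "\<dots> = (\<integral>\<^sup>+v. indicator C v * (\<integral>\<^sup>+a. ennreal (f a v) * indicator B a \<partial>mu) \<partial>distr M MV V)"
      by (rule nn_integral_distr[symmetric]) measurable
    also have "\<dots> = (\<integral>\<^sup>+v. (\<integral>\<^sup>+a. ennreal (f (snd (v, a)) (fst (v, a))) * indicator X (v, a) \<partial>mu) \<partial>distr M MV V)"
    proof (rule nn_integral_cong)
      fix v assume v: "v \<in> space (distr M MV V)"
      have [measurable]: "(\<lambda>a. f a v) \<in> borel_measurable mu"
        using measurable_compose[OF measurable_Pair2'[of v MV mu] fm] v by simp
      have "(\<integral>\<^sup>+a. ennreal (f (snd (v, a)) (fst (v, a))) * indicator X (v, a) \<partial>mu)
          = (\<integral>\<^sup>+a. indicator C v * (ennreal (f a v) * indicator B a) \<partial>mu)"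
        by (rule nn_integral_cong) (auto simp: X split: split_indicator)
      also have "\<dots> = indicator C v * (\<integral>\<^sup>+a. ennreal (f a v) * indicator B a \<partial>mu)"
        by (rule nn_integral_cmult) measurable
      finally show "indicator C v * (\<integral>\<^sup>+a. ennreal (f a v) * indicator B a \<partial>mu) =
          (\<integral>\<^sup>+a. ennreal (f (snd (v, a)) (fst (v, a))) * indicator X (v, a) \<partial>mu)" by simp
    qed
    also have "\<dots> = (\<integral>\<^sup>+p. ennreal (f (snd p) (fst p)) * indicator X p \<partial>(distr M MV V \<Otimes>\<^sub>M mu))"
      using X by (intro mu.nn_integral_fst) measurable
    also have "\<dots> = emeasure (density (distr M MV V \<Otimes>\<^sub>M mu) (\<lambda>p. ennreal (f (snd p) (fst p)))) X"
      using X by (intro emeasure_density[symmetric]) measurable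
    finally show "emeasure (distr M (MV \<Otimes>\<^sub>M mu) (\<lambda>\<omega>. (V \<omega>, A \<omega>))) X =
      emeasure (density (distr M MV V \<Otimes>\<^sub>M mu) (\<lambda>p. ennreal (f (snd p) (fst p)))) X" .
  qed
qed

lemma dens_nn:
  fixes f :: "'a \<Rightarrow> 'v \<Rightarrow> real" and V :: "'o \<Rightarrow> 'v" and A :: "'o \<Rightarrow> 'a"
  assumes prob: "prob_space M" and sf: "sigma_finite_measure mu"
    and V[measurable]: "V \<in> measurable M MV" and A[measurable]: "A \<in> measurable M mu"
    and fm: "(\<lambda>p. f (fst p) (snd p)) \<in> borel_measurable (mu \<Otimes>\<^sub>M MV)"
    and rect: "\<And>C B. C \<in> sets MV \<Longrightarrow> B \<in> sets mu \<Longrightarrow>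
      (\<integral>\<^sup>+\<omega>. indicator C (V \<omega>) * indicator B (A \<omega>) \<partial>M) =
      (\<integral>\<^sup>+\<omega>. indicator C (V \<omega>) * (\<integral>\<^sup>+a. ennreal (f a (V \<omega>)) * indicator B a \<partial>mu) \<partial>M)"
    and G[measurable]: "G \<in> borel_measurable (MV \<Otimes>\<^sub>M mu)"
  shows "(\<integral>\<^sup>+\<omega>. G (V \<omega>, A \<omega>) \<partial>M) = (\<integral>\<^sup>+\<omega>. (\<integral>\<^sup>+a. ennreal (f a (V \<omega>)) * G (V \<omega>, a) \<partial>mu) \<partial>M)"
proof -
  interpret prob_space M by fact
  interpret mu: sigma_finite_measure mu by fact
  have fm2[measurable]: "(\<lambda>p. f (snd p) (fst p)) \<in> borel_measurable (MV \<Otimes>\<^sub>M mu)"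
    using measurable_compose[OF measurable_Pair[OF measurable_snd measurable_fst] fm] by simp
  have ss: "sets (distr M MV V \<Otimes>\<^sub>M mu) = sets (MV \<Otimes>\<^sub>M mu)" by (rule sets_pair_measure_cong) simp_all
  have fm3[measurable]: "(\<lambda>p. f (snd p) (fst p)) \<in> borel_measurable (distr M MV V \<Otimes>\<^sub>M mu)"
    using measurable_cong_sets[OF ss refl, of borel] fm2 by simp
  have G3[measurable]: "G \<in> borel_measurable (distr M MV V \<Otimes>\<^sub>M mu)"
    using measurable_cong_sets[OF ss refl, of borel] G by simp
  have "(\<integral>\<^sup>+\<omega>. G (V \<omega>, A \<omega>) \<partial>M) = (\<integral>\<^sup>+p. G p \<partial>distr M (MV \<Otimes>\<^sub>M mu) (\<lambda>\<omega>. (V \<omega>, A \<omega>)))"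
    by (rule nn_integral_distr[symmetric]) measurable
  also have "\<dots> = (\<integral>\<^sup>+p. G p \<partial>density (distr M MV V \<Otimes>\<^sub>M mu) (\<lambda>p. ennreal (f (snd p) (fst p))))"
    by (simp add: dens_eq[OF assms(1-6)])
  also have "\<dots> = (\<integral>\<^sup>+p. ennreal (f (snd p) (fst p)) * G p \<partial>(distr M MV V \<Otimes>\<^sub>M mu))"
    by (rule nn_integral_density) measurable
  also have "\<dots> = (\<integral>\<^sup>+v. (\<integral>\<^sup>+a. ennreal (f a v) * G (v, a) \<partial>mu) \<partial>distr M MV V)"
  proof -
    have "(\<lambda>p. ennreal (f (snd p) (fst p)) * G p) \<in> borel_measurable (distr M MV V \<Otimes>\<^sub>M mu)" by measurable
    from mu.nn_integral_fst[OF this] show ?thesis by simp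
  qed
  also have "\<dots> = (\<integral>\<^sup>+\<omega>. (\<integral>\<^sup>+a. ennreal (f a (V \<omega>)) * G (V \<omega>, a) \<partial>mu) \<partial>M)"
  proof (rule nn_integral_distr)
    have "(\<lambda>v. \<integral>\<^sup>+a. ennreal (f a v) * G (v, a) \<partial>mu) \<in> borel_measurable (distr M MV V)"
      using mu.borel_measurable_nn_integral_fst[of "\<lambda>p. ennreal (f (snd p) (fst p)) * G p" "distr M MV V"]
      by simp
    then show "(\<lambda>v. \<integral>\<^sup>+a. ennreal (f a v) * G (v, a) \<partial>mu) \<in> borel_measurable (distr M MV V)" .
  qed measurable
  finally show ?thesis .
qed

lemma dens_real:
  fixes f :: "'a \<Rightarrow> 'v \<Rightarrow> real" and V :: "'o \<Rightarrow> 'v" and A :: "'o \<Rightarrow> 'a"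
    and G :: "'v \<times> 'a \<Rightarrow> real"
  assumes prob: "prob_space M" and sf: "sigma_finite_measure mu"
    and V[measurable]: "V \<in> measurable M MV" and A[measurable]: "A \<in> measurable M mu"
    and fm: "(\<lambda>p. f (fst p) (snd p)) \<in> borel_measurable (mu \<Otimes>\<^sub>M MV)"
    and rect: "\<And>C B. C \<in> sets MV \<Longrightarrow> B \<in> sets mu \<Longrightarrow>
      (\<integral>\<^sup>+\<omega>. indicator C (V \<omega>) * indicator B (A \<omega>) \<partial>M) =
      (\<integral>\<^sup>+\<omega>. indicator C (V \<omega>) * (\<integral>\<^sup>+a. ennreal (f a (V \<omega>)) * indicator B a \<partial>mu) \<partial>M)"
    and fnn: "\<And>a v. f a v \<ge> 0"
    and G[measurable]: "G \<in> borel_measurable (MV \<Otimes>\<^sub>M mu)"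
    and Gi: "integrable M (\<lambda>\<omega>. G (V \<omega>, A \<omega>))"
  shows "integrable M (\<lambda>\<omega>. \<integral>a. f a (V \<omega>) * G (V \<omega>, a) \<partial>mu)"
    and "(\<integral>\<omega>. G (V \<omega>, A \<omega>) \<partial>M) = (\<integral>\<omega>. (\<integral>a. f a (V \<omega>) * G (V \<omega>, a) \<partial>mu) \<partial>M)"
proof -
  interpret prob_space M by fact
  interpret mu: sigma_finite_measure mu by fact
  interpret P: prob_space "distr M MV V" by (rule prob_space_distr) fact
  interpret PP: pair_sigma_finite "distr M MV V" mu
    by (simp add: pair_sigma_finite_def P.sigma_finite_measure_axioms mu.sigma_finite_measure_axioms)
  have fm2[measurable]: "(\<lambda>p. f (snd p) (fst p)) \<in> borel_measurable (MV \<Otimes>\<^sub>M mu)"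
    using measurable_compose[OF measurable_Pair[OF measurable_snd measurable_fst] fm] by simp
  have ss: "sets (distr M MV V \<Otimes>\<^sub>M mu) = sets (MV \<Otimes>\<^sub>M mu)" by (rule sets_pair_measure_cong) simp_all
  have fm3[measurable]: "(\<lambda>p. f (snd p) (fst p)) \<in> borel_measurable (distr M MV V \<Otimes>\<^sub>M mu)"
    using measurable_cong_sets[OF ss refl, of borel] fm2 by simp
  have G3[measurable]: "G \<in> borel_measurable (distr M MV V \<Otimes>\<^sub>M mu)"
    using measurable_cong_sets[OF ss refl, of borel] G by simp
  note de = dens_eq[OF assms(1-6)]
  have i1: "integrable (distr M (MV \<Otimes>\<^sub>M mu) (\<lambda>\<omega>. (V \<omega>, A \<omega>))) G"
    using Gi by (subst integrable_distr_eq) measurable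
  then have "integrable (density (distr M MV V \<Otimes>\<^sub>M mu) (\<lambda>p. ennreal (f (snd p) (fst p)))) G"
    by (simp add: de)
  then have i2: "integrable (distr M MV V \<Otimes>\<^sub>M mu) (\<lambda>p. f (snd p) (fst p) *\<^sub>R G p)"
    by (subst (asm) integrable_density) (auto simp: fnn)
  have i3: "integrable (distr M MV V) (\<lambda>v. \<integral>a. f a v * G (v, a) \<partial>mu)"
    using PP.integrable_fst'[OF i2] by simp
  show "integrable M (\<lambda>\<omega>. \<integral>a. f a (V \<omega>) * G (V \<omega>, a) \<partial>mu)"
    using integrable_distr[OF V i3] by simp
  have mi: "(\<lambda>v. \<integral>a. f a v * G (v, a) \<partial>mu) \<in> borel_measurable (distr M MV V)"
    using integrable_iff_bounded i3 by blast
  have "(\<integral>\<omega>. G (V \<omega>, A \<omega>) \<partial>M) = (\<integral>p. G p \<partial>distr M (MV \<Otimes>\<^sub>M mu) (\<lambda>\<omega>. (V \<omega>, A \<omega>)))"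
    by (rule integral_distr[symmetric]) measurable
  also have "\<dots> = (\<integral>p. G p \<partial>density (distr M MV V \<Otimes>\<^sub>M mu) (\<lambda>p. ennreal (f (snd p) (fst p))))"
    by (simp add: de)
  also have "\<dots> = (\<integral>p. f (snd p) (fst p) *\<^sub>R G p \<partial>(distr M MV V \<Otimes>\<^sub>M mu))"
    by (rule integral_density) (auto simp: fnn)
  also have "\<dots> = (\<integral>v. (\<integral>a. f a v * G (v, a) \<partial>mu) \<partial>distr M MV V)"
    using PP.integral_fst'[OF i2] by simp
  also have "\<dots> = (\<integral>\<omega>. (\<integral>a. f a (V \<omega>) * G (V \<omega>, a) \<partial>mu) \<partial>M)"
    using mi by (subst integral_distr) (auto simp: V)
  finally show "(\<integral>\<omega>. G (V \<omega>, A \<omega>) \<partial>M) = (\<integral>\<omega>. (\<integral>a. f a (V \<omega>) * G (V \<omega>, a) \<partial>mu) \<partial>M)" .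
qed

lemma rect_real:
  fixes k c :: "'o \<Rightarrow> real" and A :: "'o \<Rightarrow> 'a"
  assumes prob: "prob_space M" and km[measurable]: "k \<in> borel_measurable M"
    and k01: "\<And>\<omega>. 0 \<le> k \<omega> \<and> k \<omega> \<le> 1"
    and A[measurable]: "A \<in> measurable M mu" and B[measurable]: "B \<in> sets mu"
    and ci: "integrable M c" and cpos: "AE \<omega> in M. c \<omega> \<ge> 0"
    and eq: "(\<integral>\<omega>. k \<omega> * indicator B (A \<omega>) \<partial>M) = (\<integral>\<omega>. k \<omega> * c \<omega> \<partial>M)"
    and phi: "AE \<omega> in M. ennreal (c \<omega>) = \<phi> \<omega>"
  shows "(\<integral>\<^sup>+\<omega>. ennreal (k \<omega>) * indicator B (A \<omega>) \<partial>M) = (\<integral>\<^sup>+\<omega>. ennreal (k \<omega>) * \<phi> \<omega> \<partial>M)"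
proof -
  interpret prob_space M by fact
  have cm[measurable]: "c \<in> borel_measurable M" using ci by auto
  have i1: "integrable M (\<lambda>\<omega>. k \<omega> * indicator B (A \<omega>))"
    by (rule integrable_const_bound[where B=1]) (auto simp: k01 abs_le_iff indicator_def)
  have i2: "integrable M (\<lambda>\<omega>. k \<omega> * c \<omega>)"
  proof (rule Bochner_Integration.integrable_bound[OF ci])
    show "AE x in M. norm (k x * c x) \<le> norm (c x)"
      using k01 by (auto simp: abs_mult intro!: mult_left_le_one_le)
  qed measurable
  have "(\<integral>\<^sup>+\<omega>. ennreal (k \<omega>) * indicator B (A \<omega>) \<partial>M) = (\<integral>\<^sup>+\<omega>. ennreal (k \<omega> * indicator B (A \<omega>)) \<partial>M)"
    by (rule nn_integral_cong) (auto simp: k01 ennreal_mult ennreal_indicator)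
  also have "\<dots> = ennreal (\<integral>\<omega>. k \<omega> * indicator B (A \<omega>) \<partial>M)"
    by (rule nn_integral_eq_integral[OF i1]) (auto simp: k01)
  also have "\<dots> = ennreal (\<integral>\<omega>. k \<omega> * c \<omega> \<partial>M)" by (simp add: eq)
  also have "\<dots> = (\<integral>\<^sup>+\<omega>. ennreal (k \<omega> * c \<omega>) \<partial>M)"
    by (rule nn_integral_eq_integral[OF i2, symmetric]) (use cpos k01 in auto)
  also have "\<dots> = (\<integral>\<^sup>+\<omega>. ennreal (k \<omega>) * \<phi> \<omega> \<partial>M)"
    by (rule nn_integral_cong_AE) (use cpos phi k01 in \<open>auto simp: ennreal_mult\<close>)
  finally show ?thesis .
qed

lemma rect_cd:
  fixes f :: "'a \<Rightarrow> 'v \<Rightarrow> real"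
  assumes prob: "prob_space M" and V[measurable]: "V \<in> measurable M MV" and A[measurable]: "A \<in> measurable M mu"
    and cd: "cond_density M A mu V MV f" and C[measurable]: "C \<in> sets MV" and B[measurable]: "B \<in> sets mu"
  shows "(\<integral>\<^sup>+\<omega>. indicator C (V \<omega>) * indicator B (A \<omega>) \<partial>M) =
      (\<integral>\<^sup>+\<omega>. indicator C (V \<omega>) * (\<integral>\<^sup>+a. ennreal (f a (V \<omega>)) * indicator B a \<partial>mu) \<partial>M)"
proof -
  interpret sfs: sigma_finite_subalgebra M "sig M V MV" by (rule sfs_sig) fact+
  interpret prob_space M by fact
  define c where "c = cexp M V MV (\<lambda>\<omega>. indicator B (A \<omega>))"
  have ksig: "(\<lambda>\<omega>. indicator C (V \<omega>) :: real) \<in> borel_measurable (sig M V MV)"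
    by (rule meas_sig[OF _ V]) measurable
  have "integrable M (\<lambda>\<omega>. indicator B (A \<omega>) :: real)"
    by (rule integrable_const_bound[where B=1]) (auto simp: indicator_def)
  then have ci: "integrable M c" unfolding c_def cexp_def by (rule sfs.real_cond_exp_int(1))
  have cpos: "AE \<omega> in M. c \<omega> \<ge> 0" unfolding c_def cexp_def by (rule sfs.real_cond_exp_pos) auto
  have eq: "(\<integral>\<omega>. indicator C (V \<omega>) * indicator B (A \<omega>) \<partial>M) = (\<integral>\<omega>. indicator C (V \<omega>) * c \<omega> \<partial>M)"
    unfolding c_def cexp_def
  proof (rule sfs.real_cond_exp_intg(2)[symmetric, OF _ ksig])
    show "integrable M (\<lambda>x. indicator C (V x) * indicator B (A x) :: real)"
      by (rule integrable_const_bound[where B=1]) (auto simp: indicator_def)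
  qed measurable
  have phi: "AE \<omega> in M. ennreal (c \<omega>) = (\<integral>\<^sup>+a. ennreal (f a (V \<omega>)) * indicator B a \<partial>mu)"
    using cd B unfolding cond_density_def c_def by blast
  have "(\<integral>\<^sup>+\<omega>. ennreal (indicator C (V \<omega>)) * indicator B (A \<omega>) \<partial>M) =
      (\<integral>\<^sup>+\<omega>. ennreal (indicator C (V \<omega>)) * (\<integral>\<^sup>+a. ennreal (f a (V \<omega>)) * indicator B a \<partial>mu) \<partial>M)"
    by (rule rect_real[OF prob _ _ A B ci cpos eq phi]) (auto simp: indicator_def)
  then show ?thesis by (simp add: ennreal_indicator)
qed

lemma lift_gen:
  fixes k1 k2 :: "'o \<Rightarrow> ennreal"
  assumes prob: "prob_space M" and V[measurable]: "V \<in> measurable M MV"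
    and k1[measurable]: "k1 \<in> borel_measurable M" and k2[measurable]: "k2 \<in> borel_measurable M"
    and fin: "(\<integral>\<^sup>+\<omega>. k1 \<omega> \<partial>M) \<noteq> \<infinity>"
    and G: "Int_stable G" "G \<subseteq> Pow (space MV)" "sets MV = sigma_sets (space MV) G" "space MV \<in> G"
    and eq: "\<And>C. C \<in> G \<Longrightarrow> (\<integral>\<^sup>+\<omega>. indicator C (V \<omega>) * k1 \<omega> \<partial>M) = (\<integral>\<^sup>+\<omega>. indicator C (V \<omega>) * k2 \<omega> \<partial>M)"
    and C: "C \<in> sets MV"
  shows "(\<integral>\<^sup>+\<omega>. indicator C (V \<omega>) * k1 \<omega> \<partial>M) = (\<integral>\<^sup>+\<omega>. indicator C (V \<omega>) * k2 \<omega> \<partial>M)"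
proof -
  have em: "emeasure (distr (density M k) MV V) C' = (\<integral>\<^sup>+\<omega>. indicator C' (V \<omega>) * k \<omega> \<partial>M)"
    if [measurable]: "k \<in> borel_measurable M" and C'[measurable]: "C' \<in> sets MV" for k C'
  proof -
    have "emeasure (distr (density M k) MV V) C' = emeasure (density M k) (V -` C' \<inter> space M)"
      by (subst emeasure_distr) auto
    also have "\<dots> = (\<integral>\<^sup>+\<omega>. k \<omega> * indicator (V -` C' \<inter> space M) \<omega> \<partial>M)"
      by (rule emeasure_density) measurable
    also have "\<dots> = (\<integral>\<^sup>+\<omega>. indicator C' (V \<omega>) * k \<omega> \<partial>M)"
      by (rule nn_integral_cong) (auto split: split_indicator)
    finally show ?thesis .
  qed
  have "distr (density M k1) MV V = distr (density M k2) MV V"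
  proof (rule measure_eqI_generator_eq[where E = G and \<Omega> = "space MV" and A = "\<lambda>_. space MV"])
    show "Int_stable G" "G \<subseteq> Pow (space MV)" by (fact G)+
    show "sets (distr (density M k1) MV V) = sigma_sets (space MV) G" using G by simp
    show "sets (distr (density M k2) MV V) = sigma_sets (space MV) G" using G by simp
    show "range (\<lambda>_. space MV) \<subseteq> G" using G by auto
    show "(\<Union>i. space MV) = space MV" by simp
    fix X assume X: "X \<in> G"
    then have Xs: "X \<in> sets MV" using G by auto
    show "emeasure (distr (density M k1) MV V) X = emeasure (distr (density M k2) MV V) X"
      using em[OF k1 Xs] em[OF k2 Xs] eq[OF X] by simp
  next
    fix i :: nat
    have "emeasure (distr (density M k1) MV V) (space MV) = (\<integral>\<^sup>+\<omega>. indicator (space MV) (V \<omega>) * k1 \<omega> \<partial>M)"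
      by (rule em) auto
    also have "\<dots> = (\<integral>\<^sup>+\<omega>. k1 \<omega> \<partial>M)"
      by (rule nn_integral_cong) (auto simp: measurable_space[OF V])
    finally show "emeasure (distr (density M k1) MV V) (space MV) \<noteq> \<infinity>" using fin by simp
  qed
  then show ?thesis using em[OF k1 C] em[OF k2 C] by simp
qed

lemma rect_ci:
  fixes f :: "'a \<Rightarrow> 'v \<Rightarrow> real" and T' :: "'o \<Rightarrow> real"
  assumes prob: "prob_space M" and V[measurable]: "V \<in> measurable M MV" and A[measurable]: "A \<in> measurable M mu"
    and W[measurable]: "W \<in> measurable M MW" and Z[measurable]: "Z \<in> measurable M MZ"
    and T'[measurable]: "T' \<in> borel_measurable M"
    and cd: "cond_density M A mu V MV f"
    and ci: "cond_indep M (\<lambda>\<omega>. (Z \<omega>, A \<omega>)) (MZ \<Otimes>\<^sub>M mu) (\<lambda>\<omega>. (T' \<omega>, W \<omega>)) (borel \<Otimes>\<^sub>M MW) V MV"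
    and C[measurable]: "C \<in> sets MV" and D[measurable]: "D \<in> sets MW" and B[measurable]: "B \<in> sets mu"
  shows "(\<integral>\<^sup>+\<omega>. indicator (C \<times> D) (V \<omega>, W \<omega>) * indicator B (A \<omega>) \<partial>M) =
      (\<integral>\<^sup>+\<omega>. indicator (C \<times> D) (V \<omega>, W \<omega>) * (\<integral>\<^sup>+a. ennreal (f a (V \<omega>)) * indicator B a \<partial>mu) \<partial>M)"
proof -
  interpret sfs: sigma_finite_subalgebra M "sig M V MV" by (rule sfs_sig) fact+
  interpret prob_space M by fact
  define c where "c = cexp M V MV (\<lambda>\<omega>. indicator B (A \<omega>))"
  define cD where "cD = cexp M V MV (\<lambda>\<omega>. indicator D (W \<omega>))"
  have ksig: "(\<lambda>\<omega>. indicator C (V \<omega>) :: real) \<in> borel_measurable (sig M V MV)"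
    by (rule meas_sig[OF _ V]) measurable
  have iB: "integrable M (\<lambda>\<omega>. indicator B (A \<omega>) :: real)"
    by (rule integrable_const_bound[where B=1]) (auto simp: indicator_def)
  then have ci': "integrable M c" unfolding c_def cexp_def by (rule sfs.real_cond_exp_int(1))
  have cpos: "AE \<omega> in M. c \<omega> \<ge> 0" unfolding c_def cexp_def by (rule sfs.real_cond_exp_pos) auto
  have csig: "c \<in> borel_measurable (sig M V MV)" unfolding c_def cexp_def by (rule borel_measurable_cond_exp)
  have cm[measurable]: "c \<in> borel_measurable M" using ci' by auto
  have ciAE: "AE \<omega> in M. cexp M V MV (\<lambda>\<omega>. indicator B (A \<omega>) * indicator D (W \<omega>)) \<omega> = c \<omega> * cD \<omega>"
  proof -
    have "space MZ \<times> B \<in> sets (MZ \<Otimes>\<^sub>M mu)" "UNIV \<times> D \<in> sets (borel \<Otimes>\<^sub>M MW)" by auto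
    with ci have a: "AE \<omega> in M.
        cexp M V MV (\<lambda>\<omega>. indicator (space MZ \<times> B) (Z \<omega>, A \<omega>) * indicator (UNIV \<times> D) (T' \<omega>, W \<omega>)) \<omega>
        = cexp M V MV (\<lambda>\<omega>. indicator (space MZ \<times> B) (Z \<omega>, A \<omega>)) \<omega> * cexp M V MV (\<lambda>\<omega>. indicator (UNIV \<times> D) (T' \<omega>, W \<omega>)) \<omega>"
      unfolding cond_indep_def by blast
    have e1: "AE \<omega> in M. cexp M V MV (\<lambda>\<omega>. indicator (space MZ \<times> B) (Z \<omega>, A \<omega>) * indicator (UNIV \<times> D) (T' \<omega>, W \<omega>)) \<omega>
        = cexp M V MV (\<lambda>\<omega>. indicator B (A \<omega>) * indicator D (W \<omega>)) \<omega>"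
      unfolding cexp_def
      by (rule sfs.real_cond_exp_cong) (auto simp: measurable_space[OF Z] split: split_indicator)
    have e2: "AE \<omega> in M. cexp M V MV (\<lambda>\<omega>. indicator (space MZ \<times> B) (Z \<omega>, A \<omega>)) \<omega> = c \<omega>"
      unfolding cexp_def c_def
      by (rule sfs.real_cond_exp_cong) (auto simp: measurable_space[OF Z] split: split_indicator)
    have e3: "(\<lambda>\<omega>. indicator (UNIV \<times> D) (T' \<omega>, W \<omega>) :: real) = (\<lambda>\<omega>. indicator D (W \<omega>))"
      by (auto split: split_indicator)
    show ?thesis using a e1 e2 unfolding e3 cD_def by eventually_elim simp
  qed
  have "(\<integral>\<omega>. (indicator C (V \<omega>) * indicator D (W \<omega>)) * (indicator B (A \<omega>) :: real) \<partial>M)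
      = (\<integral>\<omega>. indicator C (V \<omega>) * (indicator B (A \<omega>) * indicator D (W \<omega>)) \<partial>M)"
    by (rule Bochner_Integration.integral_cong) (auto simp: ac_simps)
  also have "\<dots> = (\<integral>\<omega>. indicator C (V \<omega>) * cexp M V MV (\<lambda>\<omega>. indicator B (A \<omega>) * indicator D (W \<omega>)) \<omega> \<partial>M)"
    unfolding cexp_def
  proof (rule sfs.real_cond_exp_intg(2)[symmetric, OF _ ksig])
    show "integrable M (\<lambda>x. indicator C (V x) * (indicator B (A x) * indicator D (W x)) :: real)"
      by (rule integrable_const_bound[where B=1]) (auto simp: indicator_def)
  qed measurable
  also have "\<dots> = (\<integral>\<omega>. (indicator C (V \<omega>) * c \<omega>) * cD \<omega> \<partial>M)"
    by (rule integral_cong_AE) (use ciAE in \<open>auto simp: cD_def cexp_def\<close>)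
  also have "\<dots> = (\<integral>\<omega>. (indicator C (V \<omega>) * c \<omega>) * indicator D (W \<omega>) \<partial>M)"
    unfolding cD_def cexp_def
  proof (rule sfs.real_cond_exp_intg(2))
    show "integrable M (\<lambda>x. indicator C (V x) * c x * indicator D (W x))"
    proof (rule Bochner_Integration.integrable_bound[OF ci'])
      show "AE x in M. norm (indicator C (V x) * c x * indicator D (W x)) \<le> norm (c x)"
        by (auto simp: indicator_def)
    qed measurable
    show "(\<lambda>x. indicator C (V x) * c x) \<in> borel_measurable (sig M V MV)"
      using ksig csig by measurable
  qed measurable
  also have "\<dots> = (\<integral>\<omega>. (indicator C (V \<omega>) * indicator D (W \<omega>)) * c \<omega> \<partial>M)"
    by (simp add: ac_simps)
  finally have eq: "(\<integral>\<omega>. (indicator C (V \<omega>) * indicator D (W \<omega>)) * indicator B (A \<omega>) \<partial>M)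
      = (\<integral>\<omega>. (indicator C (V \<omega>) * indicator D (W \<omega>)) * c \<omega> \<partial>M)" .
  have phi: "AE \<omega> in M. ennreal (c \<omega>) = (\<integral>\<^sup>+a. ennreal (f a (V \<omega>)) * indicator B a \<partial>mu)"
    using cd B unfolding cond_density_def c_def by blast
  have "(\<integral>\<^sup>+\<omega>. ennreal (indicator C (V \<omega>) * indicator D (W \<omega>)) * indicator B (A \<omega>) \<partial>M) =
      (\<integral>\<^sup>+\<omega>. ennreal (indicator C (V \<omega>) * indicator D (W \<omega>)) * (\<integral>\<^sup>+a. ennreal (f a (V \<omega>)) * indicator B a \<partial>mu) \<partial>M)"
    by (rule rect_real[OF prob _ _ A B ci' cpos eq phi]) (auto simp: indicator_def)
  moreover have "\<And>\<omega>. ennreal (indicator C (V \<omega>) * indicator D (W \<omega>)) = indicator (C \<times> D) (V \<omega>, W \<omega>)"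
    by (auto split: split_indicator)
  ultimately show ?thesis by simp
qed

lemma positivity:
  fixes pol :: "'a \<Rightarrow> 'x \<Rightarrow> real" and fUX :: "'a \<Rightarrow> 'u \<Rightarrow> 'x \<Rightarrow> real"
    and fWX :: "'a \<Rightarrow> 'w \<Rightarrow> 'x \<Rightarrow> real" and T' :: "'o \<Rightarrow> real"
  assumes prob: "prob_space M" and base: "sigma_finite_measure mu"
    and rvU[measurable]: "U \<in> measurable M MU" and rvX[measurable]: "X \<in> measurable M MX"
    and rvA[measurable]: "A \<in> measurable M mu" and rvZ[measurable]: "Z \<in> measurable M MZ"
    and rvW[measurable]: "W \<in> measurable M MW" and T'[measurable]: "T' \<in> borel_measurable M"
    and pi_meas: "(\<lambda>p. pol (fst p) (snd p)) \<in> borel_measurable (mu \<Otimes>\<^sub>M MX)"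
    and densUX: "cond_density M A mu (\<lambda>\<omega>. (U \<omega>, X \<omega>)) (MU \<Otimes>\<^sub>M MX) (\<lambda>a v. fUX a (fst v) (snd v))"
    and densWX: "cond_density M A mu (\<lambda>\<omega>. (W \<omega>, X \<omega>)) (MW \<Otimes>\<^sub>M MX) (\<lambda>a v. fWX a (fst v) (snd v))"
    and ci: "cond_indep M (\<lambda>\<omega>. (Z \<omega>, A \<omega>)) (MZ \<Otimes>\<^sub>M mu) (\<lambda>\<omega>. (T' \<omega>, W \<omega>)) (borel \<Otimes>\<^sub>M MW)
                (\<lambda>\<omega>. (U \<omega>, X \<omega>)) (MU \<Otimes>\<^sub>M MX)"
    and NC5: "\<And>a x u. pol a x \<noteq> 0 \<Longrightarrow> fUX a u x \<noteq> 0"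
  shows "AE \<omega> in M. AE a in mu. pol a (X \<omega>) \<noteq> 0 \<longrightarrow> fWX a (W \<omega>) (X \<omega>) \<noteq> 0"
proof -
  interpret prob_space M by fact
  interpret mu: sigma_finite_measure mu by fact
  let ?V1 = "\<lambda>\<omega>. (U \<omega>, X \<omega>)" and ?MV1 = "MU \<Otimes>\<^sub>M MX"
  let ?V' = "\<lambda>\<omega>. ((U \<omega>, X \<omega>), W \<omega>)" and ?MV' = "(MU \<Otimes>\<^sub>M MX) \<Otimes>\<^sub>M MW"
  let ?f' = "\<lambda>a v'. fUX a (fst (fst v')) (snd (fst v'))"
  let ?VW = "\<lambda>\<omega>. (W \<omega>, X \<omega>)" and ?MVW = "MW \<Otimes>\<^sub>M MX"
  let ?f2 = "\<lambda>a v. fWX a (fst v) (snd v)"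
  have fUXm: "(\<lambda>p. ?f' (fst p) (snd p)) \<in> borel_measurable (mu \<Otimes>\<^sub>M ?MV')"
  proof -
    have m: "(\<lambda>p. (fst p, fst (snd p))) \<in> measurable (mu \<Otimes>\<^sub>M ?MV') (mu \<Otimes>\<^sub>M ?MV1)" by measurable
    have "(\<lambda>p. (\<lambda>a v. fUX a (fst v) (snd v)) (fst p) (snd p)) \<in> borel_measurable (mu \<Otimes>\<^sub>M ?MV1)"
      using densUX unfolding cond_density_def by blast
    from measurable_compose[OF m this] show ?thesis by simp
  qed
  have fWXm: "(\<lambda>p. ?f2 (fst p) (snd p)) \<in> borel_measurable (mu \<Otimes>\<^sub>M ?MVW)"
    using densWX unfolding cond_density_def by blast
  have fUXnn: "\<And>a u x. 0 \<le> fUX a u x" using densUX unfolding cond_density_def by auto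
  define g2 :: "('w \<times> 'x) \<times> 'a \<Rightarrow> ennreal" where
    "g2 = (\<lambda>p. if pol (snd p) (snd (fst p)) \<noteq> 0 \<and> fWX (snd p) (fst (fst p)) (snd (fst p)) = 0 then 1 else 0)"
  define g1 :: "(('u \<times> 'x) \<times> 'w) \<times> 'a \<Rightarrow> ennreal" where
    "g1 = (\<lambda>p. g2 ((snd (fst p), snd (fst (fst p))), snd p))"
  have pm1[measurable]: "(\<lambda>p. pol (snd p) (snd (fst p))) \<in> borel_measurable (?MVW \<Otimes>\<^sub>M mu)"
  proof -
    have m: "(\<lambda>p. (snd p, snd (fst p))) \<in> measurable (?MVW \<Otimes>\<^sub>M mu) (mu \<Otimes>\<^sub>M MX)" by measurable
    from measurable_compose[OF m pi_meas] show ?thesis by simp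
  qed
  have fm1[measurable]: "(\<lambda>p. fWX (snd p) (fst (fst p)) (snd (fst p))) \<in> borel_measurable (?MVW \<Otimes>\<^sub>M mu)"
  proof -
    have m: "(\<lambda>p. (snd p, fst p)) \<in> measurable (?MVW \<Otimes>\<^sub>M mu) (mu \<Otimes>\<^sub>M ?MVW)" by measurable
    from measurable_compose[OF m fWXm] show ?thesis by simp
  qed
  have g2m[measurable]: "g2 \<in> borel_measurable (?MVW \<Otimes>\<^sub>M mu)"
    unfolding g2_def by measurable
  have g1m[measurable]: "g1 \<in> borel_measurable (?MV' \<Otimes>\<^sub>M mu)"
  proof -
    have m: "(\<lambda>p. ((snd (fst p), snd (fst (fst p))), snd p)) \<in> measurable (?MV' \<Otimes>\<^sub>M mu) (?MVW \<Otimes>\<^sub>M mu)"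
      by measurable
    from measurable_compose[OF m g2m] show ?thesis unfolding g1_def by simp
  qed
  have rect': "(\<integral>\<^sup>+\<omega>. indicator C (?V' \<omega>) * indicator B (A \<omega>) \<partial>M) =
      (\<integral>\<^sup>+\<omega>. indicator C (?V' \<omega>) * (\<integral>\<^sup>+a. ennreal (?f' a (?V' \<omega>)) * indicator B a \<partial>mu) \<partial>M)"
    if C: "C \<in> sets ?MV'" and B[measurable]: "B \<in> sets mu" for C B
  proof (rule lift_gen[where G = "{C1 \<times> D | C1 D. C1 \<in> sets ?MV1 \<and> D \<in> sets MW}" and MV = ?MV'])
    show "prob_space M" by fact
    show "?V' \<in> measurable M ?MV'" by measurable
    show "(\<lambda>\<omega>. indicator B (A \<omega>)) \<in> borel_measurable M" by measurable
    show "(\<lambda>\<omega>. \<integral>\<^sup>+a. ennreal (?f' a (?V' \<omega>)) * indicator B a \<partial>mu) \<in> borel_measurable M"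
    proof -
      have m: "(\<lambda>p. (snd p, ?V' (fst p))) \<in> measurable (M \<Otimes>\<^sub>M mu) (mu \<Otimes>\<^sub>M ?MV')" by measurable
      have [measurable]: "(\<lambda>p. fUX (snd p) (U (fst p)) (X (fst p))) \<in> borel_measurable (M \<Otimes>\<^sub>M mu)"
        using measurable_compose[OF m fUXm] by simp
      have "(\<lambda>p. ennreal (?f' (snd p) (?V' (fst p))) * indicator B (snd p)) \<in> borel_measurable (M \<Otimes>\<^sub>M mu)"
        by simp measurable
      from mu.borel_measurable_nn_integral_fst[OF this] show ?thesis by simp
    qed
    have "(\<integral>\<^sup>+\<omega>. indicator B (A \<omega>) \<partial>M) \<le> (\<integral>\<^sup>+\<omega>. 1 \<partial>M)"
      by (rule nn_integral_mono) (auto split: split_indicator)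
    then show "(\<integral>\<^sup>+\<omega>. indicator B (A \<omega>) \<partial>M) \<noteq> \<infinity>"
      by (auto simp: emeasure_space_1 top_unique)
    show "Int_stable {C1 \<times> D | C1 D. C1 \<in> sets ?MV1 \<and> D \<in> sets MW}"
      by (rule Int_stable_pair_measure_generator)
    show "{C1 \<times> D | C1 D. C1 \<in> sets ?MV1 \<and> D \<in> sets MW} \<subseteq> Pow (space ?MV')"
    proof (intro subsetI, simp only: Pow_iff, elim CollectE exE conjE)
      fix x C1 D assume "x = C1 \<times> D" "C1 \<in> sets ?MV1" "D \<in> sets MW"
      moreover have "C1 \<subseteq> space MU \<times> space MX" using sets.sets_into_space[OF \<open>C1 \<in> sets ?MV1\<close>]
        by (simp add: space_pair_measure)
      moreover have "D \<subseteq> space MW" using sets.sets_into_space[OF \<open>D \<in> sets MW\<close>] .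
      ultimately show "x \<subseteq> space ?MV'" by (auto simp: space_pair_measure)
    qed
    show "sets ?MV' = sigma_sets (space ?MV') {C1 \<times> D | C1 D. C1 \<in> sets ?MV1 \<and> D \<in> sets MW}"
      by (simp only: sets_pair_measure[of ?MV1 MW] space_pair_measure[of ?MV1 MW])
    show "space ?MV' \<in> {C1 \<times> D | C1 D. C1 \<in> sets ?MV1 \<and> D \<in> sets MW}"
      by (auto simp: space_pair_measure)
    show "C \<in> sets ?MV'" by fact
    fix C' assume "C' \<in> {C1 \<times> D | C1 D. C1 \<in> sets ?MV1 \<and> D \<in> sets MW}"
    then obtain C1 D where C1: "C1 \<in> sets ?MV1" and D: "D \<in> sets MW" and C': "C' = C1 \<times> D" by auto
    have "(\<integral>\<^sup>+\<omega>. indicator (C1 \<times> D) (?V1 \<omega>, W \<omega>) * indicator B (A \<omega>) \<partial>M) =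
      (\<integral>\<^sup>+\<omega>. indicator (C1 \<times> D) (?V1 \<omega>, W \<omega>) * (\<integral>\<^sup>+a. ennreal (fUX a (fst (?V1 \<omega>)) (snd (?V1 \<omega>))) * indicator B a \<partial>mu) \<partial>M)"
      by (rule rect_ci[OF prob _ rvA rvW rvZ T' densUX ci C1 D B]) measurable
    then show "(\<integral>\<^sup>+\<omega>. indicator C' (?V' \<omega>) * indicator B (A \<omega>) \<partial>M) =
      (\<integral>\<^sup>+\<omega>. indicator C' (?V' \<omega>) * (\<integral>\<^sup>+a. ennreal (?f' a (?V' \<omega>)) * indicator B a \<partial>mu) \<partial>M)"
      unfolding C' by simp
  qed
  have rectW: "(\<integral>\<^sup>+\<omega>. indicator C (?VW \<omega>) * indicator B (A \<omega>) \<partial>M) =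
      (\<integral>\<^sup>+\<omega>. indicator C (?VW \<omega>) * (\<integral>\<^sup>+a. ennreal (?f2 a (?VW \<omega>)) * indicator B a \<partial>mu) \<partial>M)"
    if "C \<in> sets ?MVW" "B \<in> sets mu" for C B
    by (rule rect_cd[OF prob _ rvA densWX that]) measurable
  have e1: "(\<integral>\<^sup>+\<omega>. g1 (?V' \<omega>, A \<omega>) \<partial>M) = (\<integral>\<^sup>+\<omega>. (\<integral>\<^sup>+a. ennreal (?f' a (?V' \<omega>)) * g1 (?V' \<omega>, a) \<partial>mu) \<partial>M)"
    by (rule dens_nn[OF prob base _ rvA fUXm rect' g1m]) measurable
  have e2: "(\<integral>\<^sup>+\<omega>. g2 (?VW \<omega>, A \<omega>) \<partial>M) = (\<integral>\<^sup>+\<omega>. (\<integral>\<^sup>+a. ennreal (?f2 a (?VW \<omega>)) * g2 (?VW \<omega>, a) \<partial>mu) \<partial>M)"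
    by (rule dens_nn[OF prob base _ rvA fWXm rectW g2m]) measurable
  have z: "ennreal (fWX a w x) * g2 ((w, x), a) = 0" for a w x
    by (auto simp: g2_def)
  have "(\<integral>\<^sup>+\<omega>. (\<integral>\<^sup>+a. ennreal (?f' a (?V' \<omega>)) * g1 (?V' \<omega>, a) \<partial>mu) \<partial>M) = 0"
    using e1 e2 by (simp add: z g1_def)
  then have "AE \<omega> in M. (\<integral>\<^sup>+a. ennreal (?f' a (?V' \<omega>)) * g1 (?V' \<omega>, a) \<partial>mu) = 0"
  proof (subst (asm) nn_integral_0_iff_AE)
    have m: "(\<lambda>p. (snd p, ?V' (fst p))) \<in> measurable (M \<Otimes>\<^sub>M mu) (mu \<Otimes>\<^sub>M ?MV')" by measurable
    have [measurable]: "(\<lambda>p. fUX (snd p) (U (fst p)) (X (fst p))) \<in> borel_measurable (M \<Otimes>\<^sub>M mu)"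
      using measurable_compose[OF m fUXm] by simp
    have "(\<lambda>p. ennreal (?f' (snd p) (?V' (fst p))) * g1 (?V' (fst p), snd p)) \<in> borel_measurable (M \<Otimes>\<^sub>M mu)"
      by simp measurable
    from mu.borel_measurable_nn_integral_fst[OF this]
    show "(\<lambda>\<omega>. \<integral>\<^sup>+a. ennreal (?f' a (?V' \<omega>)) * g1 (?V' \<omega>, a) \<partial>mu) \<in> borel_measurable M" by simp
  qed
  then show ?thesis
  proof (rule AE_mp[OF _ AE_I2], intro impI)
    fix \<omega> assume \<omega>: "\<omega> \<in> space M"
    assume "(\<integral>\<^sup>+a. ennreal (?f' a (?V' \<omega>)) * g1 (?V' \<omega>, a) \<partial>mu) = 0"
    then have "AE a in mu. ennreal (?f' a (?V' \<omega>)) * g1 (?V' \<omega>, a) = 0"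
    proof (subst (asm) nn_integral_0_iff_AE)
      have m: "(\<lambda>a. (a, ?V' \<omega>)) \<in> measurable mu (mu \<Otimes>\<^sub>M ?MV')"
        using \<omega> by (intro measurable_Pair2') (auto simp: space_pair_measure measurable_space[OF rvU] measurable_space[OF rvX] measurable_space[OF rvW])
      have m2: "(\<lambda>a. (?V' \<omega>, a)) \<in> measurable mu (?MV' \<Otimes>\<^sub>M mu)"
        using \<omega> by (intro measurable_Pair1') (auto simp: space_pair_measure measurable_space[OF rvU] measurable_space[OF rvX] measurable_space[OF rvW])
      have [measurable]: "(\<lambda>a. fUX a (U \<omega>) (X \<omega>)) \<in> borel_measurable mu"
        using measurable_compose[OF m fUXm] by simp
      have [measurable]: "(\<lambda>a. g1 (?V' \<omega>, a)) \<in> borel_measurable mu"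
        using measurable_compose[OF m2 g1m] by simp
      show "(\<lambda>a. ennreal (?f' a (?V' \<omega>)) * g1 (?V' \<omega>, a)) \<in> borel_measurable mu"
        by simp measurable
    qed
    then show "AE a in mu. pol a (X \<omega>) \<noteq> 0 \<longrightarrow> fWX a (W \<omega>) (X \<omega>) \<noteq> 0"
    proof (rule AE_mp[OF _ AE_I2], intro impI)
      fix a assume h: "ennreal (?f' a (?V' \<omega>)) * g1 (?V' \<omega>, a) = 0" and p: "pol a (X \<omega>) \<noteq> 0"
      have "fUX a (U \<omega>) (X \<omega>) > 0" using NC5[OF p, of "U \<omega>"] fUXnn[of a "U \<omega>" "X \<omega>"] by linarith
      then have "g1 (?V' \<omega>, a) = 0" using h by simp
      then show "fWX a (W \<omega>) (X \<omega>) \<noteq> 0" using p by (auto simp: g1_def g2_def split: if_splits)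
    qed
  qed
qed

lemma (in sigma_finite_subalgebra) trunc_ind:
  assumes E: "E \<in> sets F" and d[measurable]: "d \<in> borel_measurable M"
  shows "AE x in M. indicator E x * real_cond_exp M F d x = real_cond_exp M F (\<lambda>x. indicator E x * d x) x"
proof -
  have Em: "(indicator E :: _ \<Rightarrow> ennreal) \<in> borel_measurable F" using E by simp
  have a: "AE x in M. indicator E x * nn_cond_exp M F (\<lambda>x. ennreal (d x)) x
      = nn_cond_exp M F (\<lambda>x. indicator E x * ennreal (d x)) x"
    by (rule nn_cond_exp_prod[OF Em]) measurable
  have b: "AE x in M. indicator E x * nn_cond_exp M F (\<lambda>x. ennreal (- d x)) x
      = nn_cond_exp M F (\<lambda>x. indicator E x * ennreal (- d x)) x"
    by (rule nn_cond_exp_prod[OF Em]) measurable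
  have e1: "(\<lambda>x. ennreal (indicator E x * d x)) = (\<lambda>x. indicator E x * ennreal (d x))"
    by (auto split: split_indicator)
  have e2: "(\<lambda>x. ennreal (- (indicator E x * d x))) = (\<lambda>x. indicator E x * ennreal (- d x))"
    by (auto split: split_indicator)
  show ?thesis using a b
  proof eventually_elim
    case (elim x)
    show ?case unfolding real_cond_exp_def e1 e2 elim(1)[symmetric] elim(2)[symmetric]
      by (auto split: split_indicator)
  qed
qed

lemma cexp_minus_Fmeas:
  assumes prob: "prob_space M" and sfs: "sigma_finite_subalgebra M F"
    and g1: "integrable M g1" and g2[measurable]: "g2 \<in> borel_measurable F"
  shows "AE x in M. real_cond_exp M F (\<lambda>x. g1 x - g2 x) x = real_cond_exp M F g1 x - g2 x"
proof -
  interpret prob_space M by fact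
  interpret sfs: sigma_finite_subalgebra M F by fact
  have g2M[measurable]: "g2 \<in> borel_measurable M" by (rule measurable_from_subalg[OF sfs.subalg g2])
  have g1m[measurable]: "g1 \<in> borel_measurable M" using g1 by auto
  define E where "E n = {x \<in> space F. \<bar>g2 x\<bar> \<le> real n}" for n :: nat
  have EF: "E n \<in> sets F" for n unfolding E_def by measurable
  have EM[measurable]: "E n \<in> sets M" for n using EF[of n] sfs.subalg unfolding subalgebra_def by auto
  have sp: "space F = space M" using sfs.subalg unfolding subalgebra_def by simp
  have key: "AE x in M. indicator (E n) x * real_cond_exp M F (\<lambda>x. g1 x - g2 x) x
      = indicator (E n) x * (real_cond_exp M F g1 x - g2 x)" for n
  proof -
    have iE1: "integrable M (\<lambda>x. indicator (E n) x * g1 x)"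
      using integrable_mult_indicator[OF EM g1] by simp
    have iE2: "integrable M (\<lambda>x. indicator (E n) x * g2 x)"
      by (rule integrable_const_bound[where B="real n"]) (auto simp: E_def sp indicator_def)
    have Eind: "(\<lambda>x. indicator (E n) x :: real) \<in> borel_measurable F" using EF by simp
    have EFg2: "(\<lambda>x. indicator (E n) x * g2 x) \<in> borel_measurable F" using Eind by measurable
    have s1: "AE x in M. indicator (E n) x * real_cond_exp M F (\<lambda>x. g1 x - g2 x) x
        = real_cond_exp M F (\<lambda>x. indicator (E n) x * (g1 x - g2 x)) x"
      by (rule sfs.trunc_ind[OF EF]) measurable
    have s2: "AE x in M. real_cond_exp M F (\<lambda>x. indicator (E n) x * (g1 x - g2 x)) x
        = real_cond_exp M F (\<lambda>x. indicator (E n) x * g1 x - indicator (E n) x * g2 x) x"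
      by (rule sfs.real_cond_exp_cong) (auto simp: algebra_simps)
    have s3: "AE x in M. real_cond_exp M F (\<lambda>x. indicator (E n) x * g1 x - indicator (E n) x * g2 x) x
        = real_cond_exp M F (\<lambda>x. indicator (E n) x * g1 x) x - real_cond_exp M F (\<lambda>x. indicator (E n) x * g2 x) x"
      by (rule sfs.real_cond_exp_diff[OF iE1 iE2])
    have s4: "AE x in M. real_cond_exp M F (\<lambda>x. indicator (E n) x * g1 x) x = indicator (E n) x * real_cond_exp M F g1 x"
      by (rule sfs.real_cond_exp_mult[OF Eind g1m iE1])
    have s5: "AE x in M. real_cond_exp M F (\<lambda>x. indicator (E n) x * g2 x) x = indicator (E n) x * g2 x"
      by (rule sfs.real_cond_exp_F_meas[OF iE2 EFg2])
    show ?thesis using s1 s2 s3 s4 s5 by eventually_elim (simp add: algebra_simps)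
  qed
  then have "AE x in M. \<forall>n. indicator (E n) x * real_cond_exp M F (\<lambda>x. g1 x - g2 x) x
      = indicator (E n) x * (real_cond_exp M F g1 x - g2 x)"
    using key by (subst AE_all_countable) blast
  then show ?thesis
  proof (rule AE_mp[OF _ AE_I2], intro impI)
    fix x assume x: "x \<in> space M" and h: "\<forall>n. indicator (E n) x * real_cond_exp M F (\<lambda>x. g1 x - g2 x) x
      = indicator (E n) x * (real_cond_exp M F g1 x - g2 x)"
    obtain n :: nat where "\<bar>g2 x\<bar> \<le> real n" using real_arch_simple by blast
    then have "x \<in> E n" using x sp by (simp add: E_def)
    with h[rule_format, of n] show "real_cond_exp M F (\<lambda>x. g1 x - g2 x) x = real_cond_exp M F g1 x - g2 x"
      by simp
  qed
qed

lemma keyT: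
  fixes pol :: "'a \<Rightarrow> 'x \<Rightarrow> real" and fWX :: "'a \<Rightarrow> 'w \<Rightarrow> 'x \<Rightarrow> real"
    and h :: "'w \<times> 'a \<times> 'x \<Rightarrow> real" and q0 :: "'z \<times> 'a \<times> 'x \<Rightarrow> real"
  assumes prob: "prob_space M" and base: "sigma_finite_measure mu"
    and rvX[measurable]: "X \<in> measurable M MX"
    and rvA[measurable]: "A \<in> measurable M mu" and rvZ[measurable]: "Z \<in> measurable M MZ"
    and rvW[measurable]: "W \<in> measurable M MW"
    and pi_meas: "(\<lambda>p. pol (fst p) (snd p)) \<in> borel_measurable (mu \<Otimes>\<^sub>M MX)"
    and densWX: "cond_density M A mu (\<lambda>\<omega>. (W \<omega>, X \<omega>)) (MW \<Otimes>\<^sub>M MX) (\<lambda>a v. fWX a (fst v) (snd v))"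
    and pos: "AE \<omega> in M. AE a in mu. pol a (X \<omega>) \<noteq> 0 \<longrightarrow> fWX a (W \<omega>) (X \<omega>) \<noteq> 0"
    and hL2: "h \<in> L2 M (\<lambda>\<omega>. (W \<omega>, A \<omega>, X \<omega>)) (MW \<Otimes>\<^sub>M mu \<Otimes>\<^sub>M MX)"
    and q0: "q0 \<in> Q0obs M X MX A mu Z MZ W MW pol fWX"
  shows "integrable M (\<lambda>\<omega>. Tmap mu pol h (W \<omega>) (X \<omega>))"
    and "(\<integral>\<omega>. Tmap mu pol h (W \<omega>) (X \<omega>) \<partial>M) = (\<integral>\<omega>. pimul pol q0 (Z \<omega>, A \<omega>, X \<omega>) * h (W \<omega>, A \<omega>, X \<omega>) \<partial>M)"
proof -
  interpret prob_space M by fact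
  interpret mu: sigma_finite_measure mu by fact
  let ?WAX = "\<lambda>\<omega>. (W \<omega>, A \<omega>, X \<omega>)" and ?MWAX = "MW \<Otimes>\<^sub>M mu \<Otimes>\<^sub>M MX"
  let ?ZAX = "\<lambda>\<omega>. (Z \<omega>, A \<omega>, X \<omega>)" and ?MZAX = "MZ \<Otimes>\<^sub>M mu \<Otimes>\<^sub>M MX"
  interpret sfs: sigma_finite_subalgebra M "sig M ?WAX ?MWAX" by (rule sfs_sig) (fact, measurable)
  have hm[measurable]: "h \<in> borel_measurable ?MWAX" using hL2 unfolding L2_def by auto
  have hsq: "integrable M (\<lambda>\<omega>. (h (?WAX \<omega>))\<^sup>2)" using hL2 unfolding L2_def by auto
  have pq: "pimul pol q0 \<in> L2 M ?ZAX ?MZAX" using q0 unfolding Q0obs_def by auto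
  have pqm[measurable]: "pimul pol q0 \<in> borel_measurable ?MZAX" using pq unfolding L2_def by auto
  have pqsq: "integrable M (\<lambda>\<omega>. (pimul pol q0 (?ZAX \<omega>))\<^sup>2)" using pq unfolding L2_def by auto
  have fWXm: "(\<lambda>p. fWX (fst p) (fst (snd p)) (snd (snd p))) \<in> borel_measurable (mu \<Otimes>\<^sub>M (MW \<Otimes>\<^sub>M MX))"
    using densWX unfolding cond_density_def by simp
  define R where "R = (\<lambda>t::'w \<times> 'a \<times> 'x. pol (fst (snd t)) (snd (snd t)) * (1 / fWX (fst (snd t)) (fst t) (snd (snd t))))"
  have Rm[measurable]: "R \<in> borel_measurable ?MWAX"
  proof -
    have m1: "(\<lambda>t. (fst (snd t), snd (snd t))) \<in> measurable ?MWAX (mu \<Otimes>\<^sub>M MX)" by measurable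
    have m2: "(\<lambda>t. (fst (snd t), (fst t, snd (snd t)))) \<in> measurable ?MWAX (mu \<Otimes>\<^sub>M (MW \<Otimes>\<^sub>M MX))" by measurable
    have [measurable]: "(\<lambda>t. pol (fst (snd t)) (snd (snd t))) \<in> borel_measurable ?MWAX"
      using measurable_compose[OF m1 pi_meas] by simp
    have [measurable]: "(\<lambda>t. fWX (fst (snd t)) (fst t) (snd (snd t))) \<in> borel_measurable ?MWAX"
      using measurable_compose[OF m2 fWXm] by simp
    show ?thesis unfolding R_def by measurable
  qed
  have one: "integrable M (\<lambda>\<omega>. (1::real)\<^sup>2)" by simp
  have p0i: "integrable M (\<lambda>\<omega>. pimul pol q0 (?ZAX \<omega>))"
    using L2_prod[OF _ _ pqsq one] by simp
  have hp0i: "integrable M (\<lambda>\<omega>. h (?WAX \<omega>) * pimul pol q0 (?ZAX \<omega>))"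
    by (rule L2_prod[OF _ _ hsq pqsq]) measurable
  have hsig: "(\<lambda>\<omega>. h (?WAX \<omega>)) \<in> borel_measurable (sig M ?WAX ?MWAX)" by (rule meas_sig) measurable
  have Rsig: "(\<lambda>\<omega>. R (?WAX \<omega>)) \<in> borel_measurable (sig M ?WAX ?MWAX)" by (rule meas_sig) measurable
  have ce: "AE \<omega> in M. real_cond_exp M (sig M ?WAX ?MWAX) (\<lambda>\<omega>. pimul pol q0 (?ZAX \<omega>)) \<omega> = R (?WAX \<omega>)"
  proof -
    have a: "AE \<omega> in M. cexp M ?WAX ?MWAX
           (\<lambda>\<omega>. pol (A \<omega>) (X \<omega>) * (q0 (?ZAX \<omega>) - 1 / fWX (A \<omega>) (W \<omega>) (X \<omega>))) \<omega> = 0"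
      using q0 unfolding Q0obs_def by auto
    have fe: "(\<lambda>\<omega>. pol (A \<omega>) (X \<omega>) * (q0 (?ZAX \<omega>) - 1 / fWX (A \<omega>) (W \<omega>) (X \<omega>)))
        = (\<lambda>\<omega>. pimul pol q0 (?ZAX \<omega>) - R (?WAX \<omega>))"
      by (auto simp: pimul_def R_def algebra_simps)
    have b: "AE \<omega> in M. real_cond_exp M (sig M ?WAX ?MWAX) (\<lambda>\<omega>. pimul pol q0 (?ZAX \<omega>) - R (?WAX \<omega>)) \<omega>
        = real_cond_exp M (sig M ?WAX ?MWAX) (\<lambda>\<omega>. pimul pol q0 (?ZAX \<omega>)) \<omega> - R (?WAX \<omega>)"
      by (rule cexp_minus_Fmeas[OF prob sfs.sigma_finite_subalgebra_axioms p0i Rsig])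
    show ?thesis using a b unfolding fe cexp_def by eventually_elim simp
  qed
  have i2: "integrable M (\<lambda>\<omega>. h (?WAX \<omega>) * real_cond_exp M (sig M ?WAX ?MWAX) (\<lambda>\<omega>. pimul pol q0 (?ZAX \<omega>)) \<omega>)"
    by (rule sfs.real_cond_exp_intg(1)[OF hp0i hsig]) measurable
  have e2: "(\<integral>\<omega>. h (?WAX \<omega>) * real_cond_exp M (sig M ?WAX ?MWAX) (\<lambda>\<omega>. pimul pol q0 (?ZAX \<omega>)) \<omega> \<partial>M)
      = (\<integral>\<omega>. h (?WAX \<omega>) * pimul pol q0 (?ZAX \<omega>) \<partial>M)"
    by (rule sfs.real_cond_exp_intg(2)[OF hp0i hsig]) measurable
  have i3: "integrable M (\<lambda>\<omega>. h (?WAX \<omega>) * R (?WAX \<omega>))"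
    using i2 by (rule integrable_cong_AE_imp) (use ce in \<open>auto\<close>)
  have e3: "(\<integral>\<omega>. h (?WAX \<omega>) * R (?WAX \<omega>) \<partial>M) = (\<integral>\<omega>. h (?WAX \<omega>) * pimul pol q0 (?ZAX \<omega>) \<partial>M)"
    unfolding e2[symmetric] by (rule integral_cong_AE) (use ce in auto)
  define G where "G = (\<lambda>p::('w \<times> 'x) \<times> 'a. h (fst (fst p), snd p, snd (fst p)) * R (fst (fst p), snd p, snd (fst p)))"
  have Gm: "G \<in> borel_measurable ((MW \<Otimes>\<^sub>M MX) \<Otimes>\<^sub>M mu)"
  proof -
    have m: "(\<lambda>p. (fst (fst p), snd p, snd (fst p))) \<in> measurable ((MW \<Otimes>\<^sub>M MX) \<Otimes>\<^sub>M mu) ?MWAX" by measurable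
    have "(\<lambda>t. h t * R t) \<in> borel_measurable ?MWAX" by measurable
    from measurable_compose[OF m this] show ?thesis unfolding G_def by simp
  qed
  have GV: "(\<lambda>\<omega>. G ((W \<omega>, X \<omega>), A \<omega>)) = (\<lambda>\<omega>. h (?WAX \<omega>) * R (?WAX \<omega>))"
    by (simp add: G_def)
  have fnn: "\<And>a v. 0 \<le> fWX a (fst v) (snd v)" using densWX unfolding cond_density_def by auto
  have fm2: "(\<lambda>p. fWX (fst p) (fst (snd p)) (snd (snd p))) \<in> borel_measurable (mu \<Otimes>\<^sub>M (MW \<Otimes>\<^sub>M MX))" by (fact fWXm)
  have rectW: "(\<integral>\<^sup>+\<omega>. indicator C (W \<omega>, X \<omega>) * indicator B (A \<omega>) \<partial>M) =
      (\<integral>\<^sup>+\<omega>. indicator C (W \<omega>, X \<omega>) * (\<integral>\<^sup>+a. ennreal (fWX a (fst (W \<omega>, X \<omega>)) (snd (W \<omega>, X \<omega>))) * indicator B a \<partial>mu) \<partial>M)"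
    if "C \<in> sets (MW \<Otimes>\<^sub>M MX)" "B \<in> sets mu" for C B
    by (rule rect_cd[OF prob _ rvA densWX that]) measurable
  have Gi: "integrable M (\<lambda>\<omega>. G ((W \<omega>, X \<omega>), A \<omega>))" using i3 by (simp add: G_def)
  have Vm: "(\<lambda>\<omega>. (W \<omega>, X \<omega>)) \<in> measurable M (MW \<Otimes>\<^sub>M MX)" by measurable
  note dr = dens_real[where f = "\<lambda>a v. fWX a (fst v) (snd v)" and V = "\<lambda>\<omega>. (W \<omega>, X \<omega>)" and MV = "MW \<Otimes>\<^sub>M MX",
      OF prob base Vm rvA fm2 rectW fnn Gm Gi]
  have dr1: "integrable M (\<lambda>\<omega>. \<integral>a. fWX a (W \<omega>) (X \<omega>) * G ((W \<omega>, X \<omega>), a) \<partial>mu)"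
    using dr(1) by (simp only: fst_conv snd_conv)
  have dr2: "(\<integral>\<omega>. h (?WAX \<omega>) * R (?WAX \<omega>) \<partial>M) = (\<integral>\<omega>. (\<integral>a. fWX a (W \<omega>) (X \<omega>) * G ((W \<omega>, X \<omega>), a) \<partial>mu) \<partial>M)"
    using dr(2) unfolding GV by (simp only: fst_conv snd_conv)
  have inner: "AE \<omega> in M. (\<integral>a. fWX a (W \<omega>) (X \<omega>) * G ((W \<omega>, X \<omega>), a) \<partial>mu) = Tmap mu pol h (W \<omega>) (X \<omega>)"
    using pos
  proof (rule AE_mp[OF _ AE_I2], intro impI)
    fix \<omega> assume \<omega>: "\<omega> \<in> space M" and p: "AE a in mu. pol a (X \<omega>) \<noteq> 0 \<longrightarrow> fWX a (W \<omega>) (X \<omega>) \<noteq> 0"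
    have wx: "(W \<omega>, X \<omega>) \<in> space (MW \<Otimes>\<^sub>M MX)"
      using \<omega> by (auto simp: space_pair_measure measurable_space[OF rvW] measurable_space[OF rvX])
    have m1: "(\<lambda>a. (a, (W \<omega>, X \<omega>))) \<in> measurable mu (mu \<Otimes>\<^sub>M (MW \<Otimes>\<^sub>M MX))"
      using wx by (rule measurable_Pair2')
    have m2: "(\<lambda>a. ((W \<omega>, X \<omega>), a)) \<in> measurable mu ((MW \<Otimes>\<^sub>M MX) \<Otimes>\<^sub>M mu)"
      using wx by (rule measurable_Pair1')
    have m3: "(\<lambda>a. (W \<omega>, a, X \<omega>)) \<in> measurable mu ?MWAX"
      using \<omega> by (auto simp: measurable_space[OF rvW] measurable_space[OF rvX])
    have m4: "(\<lambda>a. (a, X \<omega>)) \<in> measurable mu (mu \<Otimes>\<^sub>M MX)"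
      using \<omega> by (auto simp: measurable_space[OF rvX])
    have [measurable]: "(\<lambda>a. fWX a (W \<omega>) (X \<omega>)) \<in> borel_measurable mu"
      using measurable_compose[OF m1 fWXm] by simp
    have [measurable]: "(\<lambda>a. G ((W \<omega>, X \<omega>), a)) \<in> borel_measurable mu"
      using measurable_compose[OF m2 Gm] by simp
    have [measurable]: "(\<lambda>a. h (W \<omega>, a, X \<omega>)) \<in> borel_measurable mu"
      using measurable_compose[OF m3 hm] by simp
    have [measurable]: "(\<lambda>a. pol a (X \<omega>)) \<in> borel_measurable mu"
      using measurable_compose[OF m4 pi_meas] by simp
    have "(\<integral>a. fWX a (W \<omega>) (X \<omega>) * G ((W \<omega>, X \<omega>), a) \<partial>mu) = (\<integral>a. h (W \<omega>, a, X \<omega>) * pol a (X \<omega>) \<partial>mu)"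
    proof (rule integral_cong_AE)
      show "AE a in mu. fWX a (W \<omega>) (X \<omega>) * G ((W \<omega>, X \<omega>), a) = h (W \<omega>, a, X \<omega>) * pol a (X \<omega>)"
        using p by eventually_elim (auto simp: G_def R_def)
    qed measurable
    then show "(\<integral>a. fWX a (W \<omega>) (X \<omega>) * G ((W \<omega>, X \<omega>), a) \<partial>mu) = Tmap mu pol h (W \<omega>) (X \<omega>)"
      by (simp add: Tmap_def)
  qed
  have Tm: "(\<lambda>\<omega>. Tmap mu pol h (W \<omega>) (X \<omega>)) \<in> borel_measurable M"
  proof -
    have m3: "(\<lambda>p. (W (fst p), snd p, X (fst p))) \<in> measurable (M \<Otimes>\<^sub>M mu) ?MWAX" by measurable
    have m4: "(\<lambda>p. (snd p, X (fst p))) \<in> measurable (M \<Otimes>\<^sub>M mu) (mu \<Otimes>\<^sub>M MX)" by measurable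
    have [measurable]: "(\<lambda>p. h (W (fst p), snd p, X (fst p))) \<in> borel_measurable (M \<Otimes>\<^sub>M mu)"
      using measurable_compose[OF m3 hm] by simp
    have [measurable]: "(\<lambda>p. pol (snd p) (X (fst p))) \<in> borel_measurable (M \<Otimes>\<^sub>M mu)"
      using measurable_compose[OF m4 pi_meas] by simp
    have "case_prod (\<lambda>\<omega> a. h (W \<omega>, a, X \<omega>) * pol a (X \<omega>)) \<in> borel_measurable (M \<Otimes>\<^sub>M mu)"
      unfolding case_prod_beta by measurable
    from mu.borel_measurable_lebesgue_integral[OF this] show ?thesis by (simp add: Tmap_def)
  qed
  show "integrable M (\<lambda>\<omega>. Tmap mu pol h (W \<omega>) (X \<omega>))"
    using dr1 by (rule integrable_cong_AE_imp) (use inner Tm in auto)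
  have "(\<integral>\<omega>. Tmap mu pol h (W \<omega>) (X \<omega>) \<partial>M) = (\<integral>\<omega>. (\<integral>a. fWX a (W \<omega>) (X \<omega>) * G ((W \<omega>, X \<omega>), a) \<partial>mu) \<partial>M)"
    by (rule integral_cong_AE) (use inner Tm borel_measurable_integrable[OF dr1] in auto)
  also have "\<dots> = (\<integral>\<omega>. h (?WAX \<omega>) * pimul pol q0 (?ZAX \<omega>) \<partial>M)" using dr2 e3 by simp
  finally show "(\<integral>\<omega>. Tmap mu pol h (W \<omega>) (X \<omega>) \<partial>M) = (\<integral>\<omega>. pimul pol q0 (?ZAX \<omega>) * h (?WAX \<omega>) \<partial>M)"
    by (simp add: mult.commute)
qed

lemma bridge_cexp:
  fixes pol :: "'a \<Rightarrow> 'x \<Rightarrow> real" and fWX :: "'a \<Rightarrow> 'w \<Rightarrow> 'x \<Rightarrow> real"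
    and q :: "'z \<times> 'a \<times> 'x \<Rightarrow> real"
  assumes prob: "prob_space M"
    and rvX[measurable]: "X \<in> measurable M MX"
    and rvA[measurable]: "A \<in> measurable M mu" and rvZ[measurable]: "Z \<in> measurable M MZ"
    and rvW[measurable]: "W \<in> measurable M MW"
    and pi_meas: "(\<lambda>p. pol (fst p) (snd p)) \<in> borel_measurable (mu \<Otimes>\<^sub>M MX)"
    and densWX: "cond_density M A mu (\<lambda>\<omega>. (W \<omega>, X \<omega>)) (MW \<Otimes>\<^sub>M MX) (\<lambda>a v. fWX a (fst v) (snd v))"
    and pq: "pimul pol q \<in> L2 M (\<lambda>\<omega>. (Z \<omega>, A \<omega>, X \<omega>)) (MZ \<Otimes>\<^sub>M mu \<Otimes>\<^sub>M MX)"
  shows "AE \<omega> in M. cexp M (\<lambda>\<omega>. (W \<omega>, A \<omega>, X \<omega>)) (MW \<Otimes>\<^sub>M mu \<Otimes>\<^sub>M MX)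
           (\<lambda>\<omega>. pol (A \<omega>) (X \<omega>) * (q (Z \<omega>, A \<omega>, X \<omega>) - 1 / fWX (A \<omega>) (W \<omega>) (X \<omega>))) \<omega>
       = cexp M (\<lambda>\<omega>. (W \<omega>, A \<omega>, X \<omega>)) (MW \<Otimes>\<^sub>M mu \<Otimes>\<^sub>M MX) (\<lambda>\<omega>. pimul pol q (Z \<omega>, A \<omega>, X \<omega>)) \<omega>
         - pol (A \<omega>) (X \<omega>) * (1 / fWX (A \<omega>) (W \<omega>) (X \<omega>))"
proof -
  interpret prob_space M by fact
  let ?WAX = "\<lambda>\<omega>. (W \<omega>, A \<omega>, X \<omega>)" and ?MWAX = "MW \<Otimes>\<^sub>M mu \<Otimes>\<^sub>M MX"
  let ?ZAX = "\<lambda>\<omega>. (Z \<omega>, A \<omega>, X \<omega>)" and ?MZAX = "MZ \<Otimes>\<^sub>M mu \<Otimes>\<^sub>M MX"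
  interpret sfs: sigma_finite_subalgebra M "sig M ?WAX ?MWAX" by (rule sfs_sig) (fact, measurable)
  have pqm[measurable]: "pimul pol q \<in> borel_measurable ?MZAX" using pq unfolding L2_def by auto
  have pqsq: "integrable M (\<lambda>\<omega>. (pimul pol q (?ZAX \<omega>))\<^sup>2)" using pq unfolding L2_def by auto
  have fWXm: "(\<lambda>p. fWX (fst p) (fst (snd p)) (snd (snd p))) \<in> borel_measurable (mu \<Otimes>\<^sub>M (MW \<Otimes>\<^sub>M MX))"
    using densWX unfolding cond_density_def by simp
  define R where "R = (\<lambda>t::'w \<times> 'a \<times> 'x. pol (fst (snd t)) (snd (snd t)) * (1 / fWX (fst (snd t)) (fst t) (snd (snd t))))"
  have Rm[measurable]: "R \<in> borel_measurable ?MWAX"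
  proof -
    have m1: "(\<lambda>t. (fst (snd t), snd (snd t))) \<in> measurable ?MWAX (mu \<Otimes>\<^sub>M MX)" by measurable
    have m2: "(\<lambda>t. (fst (snd t), (fst t, snd (snd t)))) \<in> measurable ?MWAX (mu \<Otimes>\<^sub>M (MW \<Otimes>\<^sub>M MX))" by measurable
    have [measurable]: "(\<lambda>t. pol (fst (snd t)) (snd (snd t))) \<in> borel_measurable ?MWAX"
      using measurable_compose[OF m1 pi_meas] by simp
    have [measurable]: "(\<lambda>t. fWX (fst (snd t)) (fst t) (snd (snd t))) \<in> borel_measurable ?MWAX"
      using measurable_compose[OF m2 fWXm] by simp
    show ?thesis unfolding R_def by measurable
  qed
  have one: "integrable M (\<lambda>\<omega>. (1::real)\<^sup>2)" by simp
  have p0i: "integrable M (\<lambda>\<omega>. pimul pol q (?ZAX \<omega>))"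
    using L2_prod[OF _ _ pqsq one] by simp
  have Rsig: "(\<lambda>\<omega>. R (?WAX \<omega>)) \<in> borel_measurable (sig M ?WAX ?MWAX)" by (rule meas_sig) measurable
  have fe: "(\<lambda>\<omega>. pol (A \<omega>) (X \<omega>) * (q (?ZAX \<omega>) - 1 / fWX (A \<omega>) (W \<omega>) (X \<omega>)))
      = (\<lambda>\<omega>. pimul pol q (?ZAX \<omega>) - R (?WAX \<omega>))"
    by (auto simp: pimul_def R_def algebra_simps)
  have b: "AE \<omega> in M. real_cond_exp M (sig M ?WAX ?MWAX) (\<lambda>\<omega>. pimul pol q (?ZAX \<omega>) - R (?WAX \<omega>)) \<omega>
      = real_cond_exp M (sig M ?WAX ?MWAX) (\<lambda>\<omega>. pimul pol q (?ZAX \<omega>)) \<omega> - R (?WAX \<omega>)"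
    by (rule cexp_minus_Fmeas[OF prob sfs.sigma_finite_subalgebra_axioms p0i Rsig])
  then show ?thesis unfolding fe cexp_def by (simp add: R_def)
qed

lemma part1_lemma:
  fixes h h0 :: "'w \<times> 'a \<times> 'x \<Rightarrow> real" and qs q :: "'z \<times> 'a \<times> 'x \<Rightarrow> real"
  assumes prob: "prob_space M"
    and rvX[measurable]: "X \<in> measurable M MX"
    and rvA[measurable]: "A \<in> measurable M mu" and rvZ[measurable]: "Z \<in> measurable M MZ"
    and rvW[measurable]: "W \<in> measurable M MW" and rvY[measurable]: "Y \<in> borel_measurable M"
    and Y_L2: "integrable M (\<lambda>\<omega>. (Y \<omega>)\<^sup>2)"
    and hL2: "h \<in> L2 M (\<lambda>\<omega>. (W \<omega>, A \<omega>, X \<omega>)) (MW \<Otimes>\<^sub>M mu \<Otimes>\<^sub>M MX)"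
    and h0: "h0 \<in> H0obs M X MX A mu Z MZ W MW Y"
    and qsL2: "qs \<in> L2 M (\<lambda>\<omega>. (Z \<omega>, A \<omega>, X \<omega>)) (MZ \<Otimes>\<^sub>M mu \<Otimes>\<^sub>M MX)"
    and qsAE: "AE \<omega> in M. qs (Z \<omega>, A \<omega>, X \<omega>)
                = cexp M (\<lambda>\<omega>. (Z \<omega>, A \<omega>, X \<omega>)) (MZ \<Otimes>\<^sub>M mu \<Otimes>\<^sub>M MX)
                    (\<lambda>\<omega>. h (W \<omega>, A \<omega>, X \<omega>) - h0 (W \<omega>, A \<omega>, X \<omega>)) \<omega>"
  shows "q \<in> L2 M (\<lambda>\<omega>. (Z \<omega>, A \<omega>, X \<omega>)) (MZ \<Otimes>\<^sub>M mu \<Otimes>\<^sub>M MX) \<Longrightarrow>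
      (\<integral>\<omega>. q (Z \<omega>, A \<omega>, X \<omega>) * (h (W \<omega>, A \<omega>, X \<omega>) - Y \<omega>) \<partial>M)
      = (\<integral>\<omega>. q (Z \<omega>, A \<omega>, X \<omega>) * qs (Z \<omega>, A \<omega>, X \<omega>) \<partial>M)"
    and "h \<in> H0obs M X MX A mu Z MZ W MW Y \<longleftrightarrow> (AE \<omega> in M. qs (Z \<omega>, A \<omega>, X \<omega>) = 0)"
proof -
  interpret prob_space M by fact
  let ?WAX = "\<lambda>\<omega>. (W \<omega>, A \<omega>, X \<omega>)" and ?MWAX = "MW \<Otimes>\<^sub>M mu \<Otimes>\<^sub>M MX"
  let ?ZAX = "\<lambda>\<omega>. (Z \<omega>, A \<omega>, X \<omega>)" and ?MZAX = "MZ \<Otimes>\<^sub>M mu \<Otimes>\<^sub>M MX"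
  let ?F = "sig M ?ZAX ?MZAX"
  interpret sfs: sigma_finite_subalgebra M ?F by (rule sfs_sig) (fact, measurable)
  have h0L2: "h0 \<in> L2 M ?WAX ?MWAX" using h0 unfolding H0obs_def by auto
  have h0AE: "AE \<omega> in M. cexp M ?ZAX ?MZAX (\<lambda>\<omega>. Y \<omega> - h0 (?WAX \<omega>)) \<omega> = 0"
    using h0 unfolding H0obs_def by auto
  have hm[measurable]: "h \<in> borel_measurable ?MWAX" and hsq: "integrable M (\<lambda>\<omega>. (h (?WAX \<omega>))\<^sup>2)"
    using hL2 unfolding L2_def by auto
  have h0m[measurable]: "h0 \<in> borel_measurable ?MWAX" and h0sq: "integrable M (\<lambda>\<omega>. (h0 (?WAX \<omega>))\<^sup>2)"
    using h0L2 unfolding L2_def by auto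
  have one: "integrable M (\<lambda>\<omega>. (1::real)\<^sup>2)" by simp
  have hi: "integrable M (\<lambda>\<omega>. h (?WAX \<omega>))" using L2_prod[OF _ _ hsq one] by simp
  have h0i: "integrable M (\<lambda>\<omega>. h0 (?WAX \<omega>))" using L2_prod[OF _ _ h0sq one] by simp
  have Yi: "integrable M Y" using L2_prod[OF _ _ Y_L2 one] by simp
  have c1: "AE \<omega> in M. cexp M ?ZAX ?MZAX (\<lambda>\<omega>. h (?WAX \<omega>) - Y \<omega>) \<omega> = qs (?ZAX \<omega>)"
  proof -
    have fe: "(\<lambda>\<omega>. h (?WAX \<omega>) - Y \<omega>) = (\<lambda>\<omega>. (h (?WAX \<omega>) - h0 (?WAX \<omega>)) - (Y \<omega> - h0 (?WAX \<omega>)))" by auto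
    have d: "AE \<omega> in M. real_cond_exp M ?F (\<lambda>\<omega>. (h (?WAX \<omega>) - h0 (?WAX \<omega>)) - (Y \<omega> - h0 (?WAX \<omega>))) \<omega>
       = real_cond_exp M ?F (\<lambda>\<omega>. h (?WAX \<omega>) - h0 (?WAX \<omega>)) \<omega> - real_cond_exp M ?F (\<lambda>\<omega>. Y \<omega> - h0 (?WAX \<omega>)) \<omega>"
      by (rule sfs.real_cond_exp_diff) (use hi h0i Yi in auto)
    show ?thesis using d h0AE qsAE unfolding fe cexp_def by eventually_elim simp
  qed
  have c2: "AE \<omega> in M. cexp M ?ZAX ?MZAX (\<lambda>\<omega>. Y \<omega> - h (?WAX \<omega>)) \<omega> = - qs (?ZAX \<omega>)"
  proof -
    have fe: "(\<lambda>\<omega>. Y \<omega> - h (?WAX \<omega>)) = (\<lambda>\<omega>. (Y \<omega> - h0 (?WAX \<omega>)) - (h (?WAX \<omega>) - h0 (?WAX \<omega>)))" by auto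
    have d: "AE \<omega> in M. real_cond_exp M ?F (\<lambda>\<omega>. (Y \<omega> - h0 (?WAX \<omega>)) - (h (?WAX \<omega>) - h0 (?WAX \<omega>))) \<omega>
       = real_cond_exp M ?F (\<lambda>\<omega>. Y \<omega> - h0 (?WAX \<omega>)) \<omega> - real_cond_exp M ?F (\<lambda>\<omega>. h (?WAX \<omega>) - h0 (?WAX \<omega>)) \<omega>"
      by (rule sfs.real_cond_exp_diff) (use hi h0i Yi in auto)
    show ?thesis using d h0AE qsAE unfolding fe cexp_def by eventually_elim simp
  qed
  show "h \<in> H0obs M X MX A mu Z MZ W MW Y \<longleftrightarrow> (AE \<omega> in M. qs (?ZAX \<omega>) = 0)"
  proof
    assume "h \<in> H0obs M X MX A mu Z MZ W MW Y"
    then have "AE \<omega> in M. cexp M ?ZAX ?MZAX (\<lambda>\<omega>. Y \<omega> - h (?WAX \<omega>)) \<omega> = 0" unfolding H0obs_def by auto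
    with c2 show "AE \<omega> in M. qs (?ZAX \<omega>) = 0" by eventually_elim simp
  next
    assume "AE \<omega> in M. qs (?ZAX \<omega>) = 0"
    with c2 have "AE \<omega> in M. cexp M ?ZAX ?MZAX (\<lambda>\<omega>. Y \<omega> - h (?WAX \<omega>)) \<omega> = 0" by eventually_elim simp
    with hL2 show "h \<in> H0obs M X MX A mu Z MZ W MW Y" unfolding H0obs_def by auto
  qed
  assume qL2: "q \<in> L2 M ?ZAX ?MZAX"
  have qm[measurable]: "q \<in> borel_measurable ?MZAX" and qsq: "integrable M (\<lambda>\<omega>. (q (?ZAX \<omega>))\<^sup>2)"
    using qL2 unfolding L2_def by auto
  have qsm[measurable]: "qs \<in> borel_measurable ?MZAX" using qsL2 unfolding L2_def by auto
  have qsig: "(\<lambda>\<omega>. q (?ZAX \<omega>)) \<in> borel_measurable ?F" by (rule meas_sig) measurable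
  have i1: "integrable M (\<lambda>\<omega>. q (?ZAX \<omega>) * h (?WAX \<omega>))" by (rule L2_prod[OF _ _ qsq hsq]) measurable
  have i2: "integrable M (\<lambda>\<omega>. q (?ZAX \<omega>) * Y \<omega>)" by (rule L2_prod[OF _ _ qsq Y_L2]) measurable
  have i3: "integrable M (\<lambda>\<omega>. q (?ZAX \<omega>) * (h (?WAX \<omega>) - Y \<omega>))"
    using Bochner_Integration.integrable_diff[OF i1 i2] by (simp add: algebra_simps)
  have "(\<integral>\<omega>. q (?ZAX \<omega>) * (h (?WAX \<omega>) - Y \<omega>) \<partial>M)
      = (\<integral>\<omega>. q (?ZAX \<omega>) * real_cond_exp M ?F (\<lambda>\<omega>. h (?WAX \<omega>) - Y \<omega>) \<omega> \<partial>M)"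
    by (rule sfs.real_cond_exp_intg(2)[symmetric, OF i3 qsig]) measurable
  also have "\<dots> = (\<integral>\<omega>. q (?ZAX \<omega>) * qs (?ZAX \<omega>) \<partial>M)"
    by (rule integral_cong_AE) (use c1 in \<open>auto simp: cexp_def\<close>)
  finally show "(\<integral>\<omega>. q (?ZAX \<omega>) * (h (?WAX \<omega>) - Y \<omega>) \<partial>M) = (\<integral>\<omega>. q (?ZAX \<omega>) * qs (?ZAX \<omega>) \<partial>M)" .
qed

lemma part2_lemma:
  fixes pol :: "'a \<Rightarrow> 'x \<Rightarrow> real" and fWX :: "'a \<Rightarrow> 'w \<Rightarrow> 'x \<Rightarrow> real"
    and h hs :: "'w \<times> 'a \<times> 'x \<Rightarrow> real" and q q0 :: "'z \<times> 'a \<times> 'x \<Rightarrow> real"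
  assumes prob: "prob_space M" and base: "sigma_finite_measure mu"
    and rvX[measurable]: "X \<in> measurable M MX"
    and rvA[measurable]: "A \<in> measurable M mu" and rvZ[measurable]: "Z \<in> measurable M MZ"
    and rvW[measurable]: "W \<in> measurable M MW"
    and pi_meas: "(\<lambda>p. pol (fst p) (snd p)) \<in> borel_measurable (mu \<Otimes>\<^sub>M MX)"
    and densWX: "cond_density M A mu (\<lambda>\<omega>. (W \<omega>, X \<omega>)) (MW \<Otimes>\<^sub>M MX) (\<lambda>a v. fWX a (fst v) (snd v))"
    and pos: "AE \<omega> in M. AE a in mu. pol a (X \<omega>) \<noteq> 0 \<longrightarrow> fWX a (W \<omega>) (X \<omega>) \<noteq> 0"
    and qL2: "pimul pol q \<in> L2 M (\<lambda>\<omega>. (Z \<omega>, A \<omega>, X \<omega>)) (MZ \<Otimes>\<^sub>M mu \<Otimes>\<^sub>M MX)"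
    and q0: "q0 \<in> Q0obs M X MX A mu Z MZ W MW pol fWX"
    and hsL2: "hs \<in> L2 M (\<lambda>\<omega>. (W \<omega>, A \<omega>, X \<omega>)) (MW \<Otimes>\<^sub>M mu \<Otimes>\<^sub>M MX)"
    and hsAE: "AE \<omega> in M. hs (W \<omega>, A \<omega>, X \<omega>)
                = cexp M (\<lambda>\<omega>. (W \<omega>, A \<omega>, X \<omega>)) (MW \<Otimes>\<^sub>M mu \<Otimes>\<^sub>M MX)
                    (\<lambda>\<omega>. pimul pol q (Z \<omega>, A \<omega>, X \<omega>) - pimul pol q0 (Z \<omega>, A \<omega>, X \<omega>)) \<omega>"
  shows "h \<in> L2 M (\<lambda>\<omega>. (W \<omega>, A \<omega>, X \<omega>)) (MW \<Otimes>\<^sub>M mu \<Otimes>\<^sub>M MX) \<Longrightarrow>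
      (\<integral>\<omega>. pol (A \<omega>) (X \<omega>) * q (Z \<omega>, A \<omega>, X \<omega>) * h (W \<omega>, A \<omega>, X \<omega>)
                     - Tmap mu pol h (W \<omega>) (X \<omega>) \<partial>M)
      = (\<integral>\<omega>. h (W \<omega>, A \<omega>, X \<omega>) * hs (W \<omega>, A \<omega>, X \<omega>) \<partial>M)"
    and "q \<in> Q0obs M X MX A mu Z MZ W MW pol fWX \<longleftrightarrow> (AE \<omega> in M. hs (W \<omega>, A \<omega>, X \<omega>) = 0)"
proof -
  interpret prob_space M by fact
  let ?WAX = "\<lambda>\<omega>. (W \<omega>, A \<omega>, X \<omega>)" and ?MWAX = "MW \<Otimes>\<^sub>M mu \<Otimes>\<^sub>M MX"
  let ?ZAX = "\<lambda>\<omega>. (Z \<omega>, A \<omega>, X \<omega>)" and ?MZAX = "MZ \<Otimes>\<^sub>M mu \<Otimes>\<^sub>M MX"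
  let ?F = "sig M ?WAX ?MWAX"
  interpret sfs: sigma_finite_subalgebra M ?F by (rule sfs_sig) (fact, measurable)
  have q0L2: "pimul pol q0 \<in> L2 M ?ZAX ?MZAX" using q0 unfolding Q0obs_def by auto
  have q0AE: "AE \<omega> in M. cexp M ?WAX ?MWAX
           (\<lambda>\<omega>. pol (A \<omega>) (X \<omega>) * (q0 (?ZAX \<omega>) - 1 / fWX (A \<omega>) (W \<omega>) (X \<omega>))) \<omega> = 0"
    using q0 unfolding Q0obs_def by auto
  have pqm[measurable]: "pimul pol q \<in> borel_measurable ?MZAX" and pqsq: "integrable M (\<lambda>\<omega>. (pimul pol q (?ZAX \<omega>))\<^sup>2)"
    using qL2 unfolding L2_def by auto
  have pq0m[measurable]: "pimul pol q0 \<in> borel_measurable ?MZAX" and pq0sq: "integrable M (\<lambda>\<omega>. (pimul pol q0 (?ZAX \<omega>))\<^sup>2)"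
    using q0L2 unfolding L2_def by auto
  have hsm[measurable]: "hs \<in> borel_measurable ?MWAX" using hsL2 unfolding L2_def by auto
  have one: "integrable M (\<lambda>\<omega>. (1::real)\<^sup>2)" by simp
  have pqi: "integrable M (\<lambda>\<omega>. pimul pol q (?ZAX \<omega>))" using L2_prod[OF _ _ pqsq one] by simp
  have pq0i: "integrable M (\<lambda>\<omega>. pimul pol q0 (?ZAX \<omega>))" using L2_prod[OF _ _ pq0sq one] by simp
  note b1 = bridge_cexp[OF prob rvX rvA rvZ rvW pi_meas densWX qL2]
  note b0 = bridge_cexp[OF prob rvX rvA rvZ rvW pi_meas densWX q0L2]
  have dd: "AE \<omega> in M. real_cond_exp M ?F (\<lambda>\<omega>. pimul pol q (?ZAX \<omega>) - pimul pol q0 (?ZAX \<omega>)) \<omega>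
     = real_cond_exp M ?F (\<lambda>\<omega>. pimul pol q (?ZAX \<omega>)) \<omega> - real_cond_exp M ?F (\<lambda>\<omega>. pimul pol q0 (?ZAX \<omega>)) \<omega>"
    by (rule sfs.real_cond_exp_diff[OF pqi pq0i])
  have c: "AE \<omega> in M. cexp M ?WAX ?MWAX
           (\<lambda>\<omega>. pol (A \<omega>) (X \<omega>) * (q (?ZAX \<omega>) - 1 / fWX (A \<omega>) (W \<omega>) (X \<omega>))) \<omega> = hs (?WAX \<omega>)"
    using b1 b0 q0AE dd hsAE unfolding cexp_def by eventually_elim simp
  show "q \<in> Q0obs M X MX A mu Z MZ W MW pol fWX \<longleftrightarrow> (AE \<omega> in M. hs (?WAX \<omega>) = 0)"
  proof
    assume "q \<in> Q0obs M X MX A mu Z MZ W MW pol fWX"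
    then have "AE \<omega> in M. cexp M ?WAX ?MWAX
           (\<lambda>\<omega>. pol (A \<omega>) (X \<omega>) * (q (?ZAX \<omega>) - 1 / fWX (A \<omega>) (W \<omega>) (X \<omega>))) \<omega> = 0"
      unfolding Q0obs_def by auto
    with c show "AE \<omega> in M. hs (?WAX \<omega>) = 0" by eventually_elim simp
  next
    assume "AE \<omega> in M. hs (?WAX \<omega>) = 0"
    with c have "AE \<omega> in M. cexp M ?WAX ?MWAX
           (\<lambda>\<omega>. pol (A \<omega>) (X \<omega>) * (q (?ZAX \<omega>) - 1 / fWX (A \<omega>) (W \<omega>) (X \<omega>))) \<omega> = 0"
      by eventually_elim simp
    with qL2 show "q \<in> Q0obs M X MX A mu Z MZ W MW pol fWX" unfolding Q0obs_def by auto
  qed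
  assume hL2: "h \<in> L2 M ?WAX ?MWAX"
  have hm[measurable]: "h \<in> borel_measurable ?MWAX" and hsq: "integrable M (\<lambda>\<omega>. (h (?WAX \<omega>))\<^sup>2)"
    using hL2 unfolding L2_def by auto
  have pos': "AE \<omega> in M. AE a in mu. pol a (X \<omega>) \<noteq> 0 \<longrightarrow> fWX a (W \<omega>) (X \<omega>) \<noteq> 0" by fact
  note kT = keyT[OF prob base rvX rvA rvZ rvW pi_meas densWX pos' hL2 q0]
  have hsig: "(\<lambda>\<omega>. h (?WAX \<omega>)) \<in> borel_measurable ?F" by (rule meas_sig) measurable
  have i1: "integrable M (\<lambda>\<omega>. pimul pol q (?ZAX \<omega>) * h (?WAX \<omega>))" by (rule L2_prod[OF _ _ pqsq hsq]) measurable
  have i0: "integrable M (\<lambda>\<omega>. pimul pol q0 (?ZAX \<omega>) * h (?WAX \<omega>))" by (rule L2_prod[OF _ _ pq0sq hsq]) measurable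
  have i2: "integrable M (\<lambda>\<omega>. h (?WAX \<omega>) * (pimul pol q (?ZAX \<omega>) - pimul pol q0 (?ZAX \<omega>)))"
    using Bochner_Integration.integrable_diff[OF i1 i0] by (simp add: algebra_simps)
  have pe: "\<And>\<omega>. pol (A \<omega>) (X \<omega>) * q (?ZAX \<omega>) = pimul pol q (?ZAX \<omega>)" by (simp add: pimul_def)
  have "(\<integral>\<omega>. pol (A \<omega>) (X \<omega>) * q (?ZAX \<omega>) * h (?WAX \<omega>) - Tmap mu pol h (W \<omega>) (X \<omega>) \<partial>M)
      = (\<integral>\<omega>. pimul pol q (?ZAX \<omega>) * h (?WAX \<omega>) - Tmap mu pol h (W \<omega>) (X \<omega>) \<partial>M)"
    by (simp only: pe)
  also have "\<dots> = (\<integral>\<omega>. pimul pol q (?ZAX \<omega>) * h (?WAX \<omega>) \<partial>M) - (\<integral>\<omega>. Tmap mu pol h (W \<omega>) (X \<omega>) \<partial>M)"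
    by (rule Bochner_Integration.integral_diff[OF i1 kT(1)])
  also have "\<dots> = (\<integral>\<omega>. pimul pol q (?ZAX \<omega>) * h (?WAX \<omega>) \<partial>M) - (\<integral>\<omega>. pimul pol q0 (?ZAX \<omega>) * h (?WAX \<omega>) \<partial>M)"
    by (simp add: kT(2))
  also have "\<dots> = (\<integral>\<omega>. pimul pol q (?ZAX \<omega>) * h (?WAX \<omega>) - pimul pol q0 (?ZAX \<omega>) * h (?WAX \<omega>) \<partial>M)"
    by (rule Bochner_Integration.integral_diff[OF i1 i0, symmetric])
  also have "\<dots> = (\<integral>\<omega>. h (?WAX \<omega>) * (pimul pol q (?ZAX \<omega>) - pimul pol q0 (?ZAX \<omega>)) \<partial>M)"
    by (simp add: algebra_simps)
  also have "\<dots> = (\<integral>\<omega>. h (?WAX \<omega>) * real_cond_exp M ?F (\<lambda>\<omega>. pimul pol q (?ZAX \<omega>) - pimul pol q0 (?ZAX \<omega>)) \<omega> \<partial>M)"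
    by (rule sfs.real_cond_exp_intg(2)[symmetric, OF i2 hsig]) measurable
  also have "\<dots> = (\<integral>\<omega>. h (?WAX \<omega>) * hs (?WAX \<omega>) \<partial>M)"
    by (rule integral_cong_AE) (use hsAE in \<open>auto simp: cexp_def\<close>)
  finally show "(\<integral>\<omega>. pol (A \<omega>) (X \<omega>) * q (?ZAX \<omega>) * h (?WAX \<omega>) - Tmap mu pol h (W \<omega>) (X \<omega>) \<partial>M)
      = (\<integral>\<omega>. h (?WAX \<omega>) * hs (?WAX \<omega>) \<partial>M)" .
qed

theorem mainTheorem7:
  fixes M :: "'o measure"
    and U :: "'o \<Rightarrow> 'u" and MU :: "'u measure"
    and X :: "'o \<Rightarrow> 'x" and MX :: "'x measure"
    and A :: "'o \<Rightarrow> 'a" and mu :: "'a measure"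
    and Z :: "'o \<Rightarrow> 'z" and MZ :: "'z measure"
    and W :: "'o \<Rightarrow> 'w" and MW :: "'w measure"
    and Y :: "'o \<Rightarrow> real"
    and Ya :: "'a \<Rightarrow> 'o \<Rightarrow> real"
    and Yaz :: "'a \<Rightarrow> 'z \<Rightarrow> 'o \<Rightarrow> real"
    and Waz :: "'a \<Rightarrow> 'z \<Rightarrow> 'o \<Rightarrow> 'w"
    and pol :: "'a \<Rightarrow> 'x \<Rightarrow> real"
    and fUX :: "'a \<Rightarrow> 'u \<Rightarrow> 'x \<Rightarrow> real"
    and fWX :: "'a \<Rightarrow> 'w \<Rightarrow> 'x \<Rightarrow> real"
    and H H' :: "('w \<times> 'a \<times> 'x \<Rightarrow> real) set"
    and Q Q' :: "('z \<times> 'a \<times> 'x \<Rightarrow> real) set"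
    and lam :: real
  assumes prob: "prob_space M"
    and base: "sigma_finite_measure mu"
    and rvU: "U \<in> measurable M MU" and rvX: "X \<in> measurable M MX"
    and rvA: "A \<in> measurable M mu" and rvZ: "Z \<in> measurable M MZ"
    and rvW: "W \<in> measurable M MW" and rvY: "Y \<in> borel_measurable M"
    and Y_L2: "integrable M (\<lambda>\<omega>. (Y \<omega>)\<^sup>2)"
    and rvYa: "\<And>a. Ya a \<in> borel_measurable M"
    and pi_meas: "(\<lambda>p. pol (fst p) (snd p)) \<in> borel_measurable (mu \<Otimes>\<^sub>M MX)"
    and densUX: "cond_density M A mu (\<lambda>\<omega>. (U \<omega>, X \<omega>)) (MU \<Otimes>\<^sub>M MX)
                   (\<lambda>a v. fUX a (fst v) (snd v))"
    and densWX: "cond_density M A mu (\<lambda>\<omega>. (W \<omega>, X \<omega>)) (MW \<Otimes>\<^sub>M MX)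
                   (\<lambda>a v. fWX a (fst v) (snd v))"
    \<comment> \<open>Assumption (NC)\<close>
    and NC1: "(AE \<omega> in M. Y \<omega> = Yaz (A \<omega>) (Z \<omega>) \<omega>) \<and> (AE \<omega> in M. W \<omega> = Waz (A \<omega>) (Z \<omega>) \<omega>)"
    and NC2: "\<And>a z. AE \<omega> in M. Yaz a z \<omega> = Ya a \<omega>"
    and NC3: "\<And>a z. AE \<omega> in M. Waz a z \<omega> = W \<omega>"
    and NC4: "\<And>a. cond_indep M (\<lambda>\<omega>. (Z \<omega>, A \<omega>)) (MZ \<Otimes>\<^sub>M mu)
                 (\<lambda>\<omega>. (Ya a \<omega>, W \<omega>)) (borel \<Otimes>\<^sub>M MW) (\<lambda>\<omega>. (U \<omega>, X \<omega>)) (MU \<Otimes>\<^sub>M MX)"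
    and NC5: "\<And>a x u. pol a x \<noteq> 0 \<Longrightarrow> fUX a u x \<noteq> 0"
    \<comment> \<open>Assumption (B)\<close>
    and B1: "H0 M U MU X MX A mu W MW Y \<noteq> {}"
    and B2: "Q0 M U MU X MX A mu Z MZ pol fUX \<noteq> {}"
    \<comment> \<open>function classes\<close>
    and H_L2: "H \<subseteq> L2 M (\<lambda>\<omega>. (W \<omega>, A \<omega>, X \<omega>)) (MW \<Otimes>\<^sub>M mu \<Otimes>\<^sub>M MX)"
    and Q_L2: "pimul pol ` Q \<subseteq> L2 M (\<lambda>\<omega>. (Z \<omega>, A \<omega>, X \<omega>)) (MZ \<Otimes>\<^sub>M mu \<Otimes>\<^sub>M MX)"
    and H_ne: "H0obs M X MX A mu Z MZ W MW Y \<inter> H \<noteq> {}"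
    and Q_ne: "Q0obs M X MX A mu Z MZ W MW pol fWX \<inter> Q \<noteq> {}"
    and Q'_L2: "Q' \<subseteq> L2 M (\<lambda>\<omega>. (Z \<omega>, A \<omega>, X \<omega>)) (MZ \<Otimes>\<^sub>M mu \<Otimes>\<^sub>M MX)"
    and H'_L2: "H' \<subseteq> L2 M (\<lambda>\<omega>. (W \<omega>, A \<omega>, X \<omega>)) (MW \<Otimes>\<^sub>M mu \<Otimes>\<^sub>M MX)"
    and PzH: "\<forall>h\<in>H. \<forall>h0\<in>H0obs M X MX A mu Z MZ W MW Y. \<exists>q\<in>Q'. AE \<omega> in M.
                q (Z \<omega>, A \<omega>, X \<omega>)
                = cexp M (\<lambda>\<omega>. (Z \<omega>, A \<omega>, X \<omega>)) (MZ \<Otimes>\<^sub>M mu \<Otimes>\<^sub>M MX)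
                    (\<lambda>\<omega>. h (W \<omega>, A \<omega>, X \<omega>) - h0 (W \<omega>, A \<omega>, X \<omega>)) \<omega>"
    and PwQ: "\<forall>q\<in>Q. \<forall>q0\<in>Q0obs M X MX A mu Z MZ W MW pol fWX. \<exists>h\<in>H'. AE \<omega> in M.
                h (W \<omega>, A \<omega>, X \<omega>)
                = cexp M (\<lambda>\<omega>. (W \<omega>, A \<omega>, X \<omega>)) (MW \<Otimes>\<^sub>M mu \<Otimes>\<^sub>M MX)
                    (\<lambda>\<omega>. pimul pol q (Z \<omega>, A \<omega>, X \<omega>) - pimul pol q0 (Z \<omega>, A \<omega>, X \<omega>)) \<omega>"
    and lam_pos: "lam > 0"
    and star_or_half: "(star_shaped Q' \<and> star_shaped H') \<or> lam = 1/2"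
  shows "(H0obs M X MX A mu Z MZ W MW Y \<inter> H =
           argmin_on H (\<lambda>h. SUP q\<in>Q'. ereal
             ((\<integral>\<omega>. q (Z \<omega>, A \<omega>, X \<omega>) * (h (W \<omega>, A \<omega>, X \<omega>) - Y \<omega>) \<partial>M)
              - lam * (\<integral>\<omega>. (q (Z \<omega>, A \<omega>, X \<omega>))\<^sup>2 \<partial>M)))) \<and>
         (Q0obs M X MX A mu Z MZ W MW pol fWX \<inter> Q =
           argmin_on Q (\<lambda>q. SUP h\<in>H'. ereal
             ((\<integral>\<omega>. pol (A \<omega>) (X \<omega>) * q (Z \<omega>, A \<omega>, X \<omega>) * h (W \<omega>, A \<omega>, X \<omega>)
                     - Tmap mu pol h (W \<omega>) (X \<omega>) \<partial>M)
              - lam * (\<integral>\<omega>. (h (W \<omega>, A \<omega>, X \<omega>))\<^sup>2 \<partial>M))))"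
proof -
  interpret prob_space M by fact
  note [measurable] = rvU rvX rvA rvZ rvW rvY
  let ?WAX = "\<lambda>\<omega>. (W \<omega>, A \<omega>, X \<omega>)" and ?MWAX = "MW \<Otimes>\<^sub>M mu \<Otimes>\<^sub>M MX"
  let ?ZAX = "\<lambda>\<omega>. (Z \<omega>, A \<omega>, X \<omega>)" and ?MZAX = "MZ \<Otimes>\<^sub>M mu \<Otimes>\<^sub>M MX"
  have ZAXm: "?ZAX \<in> measurable M ?MZAX" by measurable
  have WAXm: "?WAX \<in> measurable M ?MWAX" by measurable
  have pos: "AE \<omega> in M. AE a in mu. pol a (X \<omega>) \<noteq> 0 \<longrightarrow> fWX a (W \<omega>) (X \<omega>) \<noteq> 0"
    by (rule positivity[OF prob base rvU rvX rvA rvZ rvW rvYa[of undefined] pi_meas densUX densWX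
          NC4[of undefined] NC5])
  have so1: "star_shaped Q' \<or> lam = 1/2" and so2: "star_shaped H' \<or> lam = 1/2" using star_or_half by auto
  obtain h0 where h0: "h0 \<in> H0obs M X MX A mu Z MZ W MW Y" "h0 \<in> H" using H_ne by auto
  obtain q0 where q0: "q0 \<in> Q0obs M X MX A mu Z MZ W MW pol fWX" "q0 \<in> Q" using Q_ne by auto
  have part1: "H0obs M X MX A mu Z MZ W MW Y \<inter> H =
           argmin_on H (\<lambda>h. SUP q\<in>Q'. ereal
             ((\<integral>\<omega>. q (Z \<omega>, A \<omega>, X \<omega>) * (h (W \<omega>, A \<omega>, X \<omega>) - Y \<omega>) \<partial>M)
              - lam * (\<integral>\<omega>. (q (Z \<omega>, A \<omega>, X \<omega>))\<^sup>2 \<partial>M)))"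
  proof (rule argmin_char)
    show "H0obs M X MX A mu Z MZ W MW Y \<inter> H \<subseteq> H" by auto
    show "H0obs M X MX A mu Z MZ W MW Y \<inter> H \<noteq> {}" by fact
    {
      fix h assume h: "h \<in> H"
      obtain qs where qs: "qs \<in> Q'" and qsAE: "AE \<omega> in M. qs (?ZAX \<omega>)
                = cexp M ?ZAX ?MZAX (\<lambda>\<omega>. h (?WAX \<omega>) - h0 (?WAX \<omega>)) \<omega>"
        using PzH h h0(1) by blast
      have hL2: "h \<in> L2 M ?WAX ?MWAX" using h H_L2 by auto
      have qsL2: "qs \<in> L2 M ?ZAX ?MZAX" using qs Q'_L2 by auto
      note pl = part1_lemma[OF prob rvX rvA rvZ rvW rvY Y_L2 hL2 h0(1) qsL2 qsAE]
      have eqS: "(SUP q\<in>Q'. ereal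
             ((\<integral>\<omega>. q (?ZAX \<omega>) * (h (?WAX \<omega>) - Y \<omega>) \<partial>M) - lam * (\<integral>\<omega>. (q (?ZAX \<omega>))\<^sup>2 \<partial>M)))
          = (SUP q\<in>Q'. ereal ((\<lambda>q. (\<integral>\<omega>. q (?ZAX \<omega>) * qs (?ZAX \<omega>) \<partial>M) - lam * (\<integral>\<omega>. (q (?ZAX \<omega>))\<^sup>2 \<partial>M)) q))"
        by (rule SUP_cong) (use pl(1) Q'_L2 in auto)
      note co = core[OF prob ZAXm Q'_L2 qs, where F = "\<lambda>q. (\<integral>\<omega>. q (?ZAX \<omega>) * qs (?ZAX \<omega>) \<partial>M) - lam * (\<integral>\<omega>. (q (?ZAX \<omega>))\<^sup>2 \<partial>M)",
          OF refl lam_pos so1]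
      have "h \<in> H0obs M X MX A mu Z MZ W MW Y \<Longrightarrow> (SUP q\<in>Q'. ereal
             ((\<integral>\<omega>. q (?ZAX \<omega>) * (h (?WAX \<omega>) - Y \<omega>) \<partial>M) - lam * (\<integral>\<omega>. (q (?ZAX \<omega>))\<^sup>2 \<partial>M))) = 0"
        using co(1) pl(2) eqS by simp
      moreover have "h \<notin> H0obs M X MX A mu Z MZ W MW Y \<Longrightarrow> (SUP q\<in>Q'. ereal
             ((\<integral>\<omega>. q (?ZAX \<omega>) * (h (?WAX \<omega>) - Y \<omega>) \<partial>M) - lam * (\<integral>\<omega>. (q (?ZAX \<omega>))\<^sup>2 \<partial>M))) > 0"
        using co(2) pl(2) eqS by simp
      ultimately have "(h \<in> H0obs M X MX A mu Z MZ W MW Y \<longrightarrow> (SUP q\<in>Q'. ereal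
             ((\<integral>\<omega>. q (?ZAX \<omega>) * (h (?WAX \<omega>) - Y \<omega>) \<partial>M) - lam * (\<integral>\<omega>. (q (?ZAX \<omega>))\<^sup>2 \<partial>M))) = 0) \<and>
          (h \<notin> H0obs M X MX A mu Z MZ W MW Y \<longrightarrow> (SUP q\<in>Q'. ereal
             ((\<integral>\<omega>. q (?ZAX \<omega>) * (h (?WAX \<omega>) - Y \<omega>) \<partial>M) - lam * (\<integral>\<omega>. (q (?ZAX \<omega>))\<^sup>2 \<partial>M))) > 0)" by blast
    }
    note P = this
    show "\<And>x. x \<in> H0obs M X MX A mu Z MZ W MW Y \<inter> H \<Longrightarrow> (SUP q\<in>Q'. ereal
             ((\<integral>\<omega>. q (?ZAX \<omega>) * (x (?WAX \<omega>) - Y \<omega>) \<partial>M) - lam * (\<integral>\<omega>. (q (?ZAX \<omega>))\<^sup>2 \<partial>M))) = 0"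
      using P by blast
    show "\<And>x. x \<in> H \<Longrightarrow> x \<notin> H0obs M X MX A mu Z MZ W MW Y \<inter> H \<Longrightarrow> (SUP q\<in>Q'. ereal
             ((\<integral>\<omega>. q (?ZAX \<omega>) * (x (?WAX \<omega>) - Y \<omega>) \<partial>M) - lam * (\<integral>\<omega>. (q (?ZAX \<omega>))\<^sup>2 \<partial>M))) > 0"
      using P by blast
  qed
  have part2: "Q0obs M X MX A mu Z MZ W MW pol fWX \<inter> Q =
           argmin_on Q (\<lambda>q. SUP h\<in>H'. ereal
             ((\<integral>\<omega>. pol (A \<omega>) (X \<omega>) * q (Z \<omega>, A \<omega>, X \<omega>) * h (W \<omega>, A \<omega>, X \<omega>)
                     - Tmap mu pol h (W \<omega>) (X \<omega>) \<partial>M)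
              - lam * (\<integral>\<omega>. (h (W \<omega>, A \<omega>, X \<omega>))\<^sup>2 \<partial>M)))"
  proof (rule argmin_char)
    show "Q0obs M X MX A mu Z MZ W MW pol fWX \<inter> Q \<subseteq> Q" by auto
    show "Q0obs M X MX A mu Z MZ W MW pol fWX \<inter> Q \<noteq> {}" by fact
    {
      fix q assume q: "q \<in> Q"
      obtain hs where hs: "hs \<in> H'" and hsAE: "AE \<omega> in M. hs (?WAX \<omega>)
                = cexp M ?WAX ?MWAX (\<lambda>\<omega>. pimul pol q (?ZAX \<omega>) - pimul pol q0 (?ZAX \<omega>)) \<omega>"
        using PwQ q q0(1) by blast
      have qL2: "pimul pol q \<in> L2 M ?ZAX ?MZAX" using q Q_L2 by auto
      have hsL2: "hs \<in> L2 M ?WAX ?MWAX" using hs H'_L2 by auto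
      note pl = part2_lemma[OF prob base rvX rvA rvZ rvW pi_meas densWX pos qL2 q0(1) hsL2 hsAE]
      have eqS: "(SUP h\<in>H'. ereal
             ((\<integral>\<omega>. pol (A \<omega>) (X \<omega>) * q (?ZAX \<omega>) * h (?WAX \<omega>) - Tmap mu pol h (W \<omega>) (X \<omega>) \<partial>M)
              - lam * (\<integral>\<omega>. (h (?WAX \<omega>))\<^sup>2 \<partial>M)))
          = (SUP h\<in>H'. ereal ((\<lambda>h. (\<integral>\<omega>. h (?WAX \<omega>) * hs (?WAX \<omega>) \<partial>M) - lam * (\<integral>\<omega>. (h (?WAX \<omega>))\<^sup>2 \<partial>M)) h))"
        by (rule SUP_cong) (use pl(1) H'_L2 in auto)
      note co = core[OF prob WAXm H'_L2 hs, where F = "\<lambda>h. (\<integral>\<omega>. h (?WAX \<omega>) * hs (?WAX \<omega>) \<partial>M) - lam * (\<integral>\<omega>. (h (?WAX \<omega>))\<^sup>2 \<partial>M)",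
          OF refl lam_pos so2]
      have "q \<in> Q0obs M X MX A mu Z MZ W MW pol fWX \<Longrightarrow> (SUP h\<in>H'. ereal
             ((\<integral>\<omega>. pol (A \<omega>) (X \<omega>) * q (?ZAX \<omega>) * h (?WAX \<omega>) - Tmap mu pol h (W \<omega>) (X \<omega>) \<partial>M)
              - lam * (\<integral>\<omega>. (h (?WAX \<omega>))\<^sup>2 \<partial>M))) = 0"
        using co(1) pl(2) eqS by simp
      moreover have "q \<notin> Q0obs M X MX A mu Z MZ W MW pol fWX \<Longrightarrow> (SUP h\<in>H'. ereal
             ((\<integral>\<omega>. pol (A \<omega>) (X \<omega>) * q (?ZAX \<omega>) * h (?WAX \<omega>) - Tmap mu pol h (W \<omega>) (X \<omega>) \<partial>M)
              - lam * (\<integral>\<omega>. (h (?WAX \<omega>))\<^sup>2 \<partial>M))) > 0"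
        using co(2) pl(2) eqS by simp
      ultimately have "(q \<in> Q0obs M X MX A mu Z MZ W MW pol fWX \<longrightarrow> (SUP h\<in>H'. ereal
             ((\<integral>\<omega>. pol (A \<omega>) (X \<omega>) * q (?ZAX \<omega>) * h (?WAX \<omega>) - Tmap mu pol h (W \<omega>) (X \<omega>) \<partial>M)
              - lam * (\<integral>\<omega>. (h (?WAX \<omega>))\<^sup>2 \<partial>M))) = 0) \<and>
          (q \<notin> Q0obs M X MX A mu Z MZ W MW pol fWX \<longrightarrow> (SUP h\<in>H'. ereal
             ((\<integral>\<omega>. pol (A \<omega>) (X \<omega>) * q (?ZAX \<omega>) * h (?WAX \<omega>) - Tmap mu pol h (W \<omega>) (X \<omega>) \<partial>M)
              - lam * (\<integral>\<omega>. (h (?WAX \<omega>))\<^sup>2 \<partial>M))) > 0)" by blast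
    }
    note P = this
    show "\<And>x. x \<in> Q0obs M X MX A mu Z MZ W MW pol fWX \<inter> Q \<Longrightarrow> (SUP h\<in>H'. ereal
             ((\<integral>\<omega>. pol (A \<omega>) (X \<omega>) * x (?ZAX \<omega>) * h (?WAX \<omega>) - Tmap mu pol h (W \<omega>) (X \<omega>) \<partial>M)
              - lam * (\<integral>\<omega>. (h (?WAX \<omega>))\<^sup>2 \<partial>M))) = 0"
      using P by blast
    show "\<And>x. x \<in> Q \<Longrightarrow> x \<notin> Q0obs M X MX A mu Z MZ W MW pol fWX \<inter> Q \<Longrightarrow> (SUP h\<in>H'. ereal
             ((\<integral>\<omega>. pol (A \<omega>) (X \<omega>) * x (?ZAX \<omega>) * h (?WAX \<omega>) - Tmap mu pol h (W \<omega>) (X \<omega>) \<partial>M)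
              - lam * (\<integral>\<omega>. (h (?WAX \<omega>))\<^sup>2 \<partial>M))) > 0"
      using P by blast
  qed
  show ?thesis using part1 part2 by blast
qed

end
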